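(* Let $p>1$ and let $\mu$ be a probability measure on $G=\mathrm{SL}_2(\mathbb{C})$. If $\int_G\log^p\|g\|\,d\mu(g)<\infty$, then $\xi\mapsto\mathcal{P}_\xi$, as a family of bounded operators on $\mathcal{C}^{\log^{p-1}}$, is continuous in operator norm. If $\int_G\log^{p+1}\|g\|\,d\mu(g)<\infty$, this family is locally Lipschitz continuous in $\xi$.
   Context: $\sigma_g(x)=\log(\|gv\|/\|v\|)$ for $x=[v]\in\mathbb{P}^1$; $\mathcal{P}_\xi u(x)=\int_G e^{i\xi\sigma_g(x)}u(gx)\,d\mu(g)$. With $d([v],[w])=|\det(v,w)|/(\|v\|\|w\|)$ and $\log^\star t=1+|\log t|$: $\|u\|_{\log^q}=\|u\|_\infty+\sup_{x\ne y}|u(x)-u(y)|(\log^\star d(x,y))^q$, and $\mathcal{C}^{\log^q}$ is the Banach space of functions with finite $\|\cdot\|_{\log^q}$. *)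

theory Defs
  imports "HOL-Analysis.Analysis" "HOL-Probability.Probability"
begin

text \<open>Points of the projective line P^1 over C are represented by nonzero vectors
  v :: complex^2 (the point [v]); functions on P^1 are functions on complex^2 that are
  invariant under nonzero scalar multiplication (values at 0 are irrelevant).\<close>

type_synonym cvec = "complex^2"
type_synonym cmat = "complex^2^2"

definition opnorm :: "cmat \<Rightarrow> real" where
  "opnorm g = onorm (\<lambda>v::cvec. g *v v)"

definition cocycle :: "cmat \<Rightarrow> cvec \<Rightarrow> real" where
  "cocycle g v = ln (norm (g *v v) / norm v)"

definition pdist :: "cvec \<Rightarrow> cvec \<Rightarrow> real" where
  "pdist v w = cmod (v$1 * w$2 - v$2 * w$1) / (norm v * norm w)"

definition logstar :: "real \<Rightarrow> real" where
  "logstar t = 1 + \<bar>ln t\<bar>"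

definition Pxi :: "cmat measure \<Rightarrow> real \<Rightarrow> (cvec \<Rightarrow> complex) \<Rightarrow> cvec \<Rightarrow> complex" where
  "Pxi \<mu> \<xi> u v = (LINT g|\<mu>. exp (\<i> * complex_of_real (\<xi> * cocycle g v)) * u (g *v v))"

definition sup_part :: "(cvec \<Rightarrow> complex) \<Rightarrow> real" where
  "sup_part u = (SUP v\<in>{v. v \<noteq> 0}. cmod (u v))"

definition holder_part :: "real \<Rightarrow> (cvec \<Rightarrow> complex) \<Rightarrow> real" where
  "holder_part q u = (SUP vw\<in>{(v,w). v \<noteq> 0 \<and> w \<noteq> 0 \<and> pdist v w \<noteq> 0}.
      cmod (u (fst vw) - u (snd vw)) * logstar (pdist (fst vw) (snd vw)) powr q)"

definition lognorm :: "real \<Rightarrow> (cvec \<Rightarrow> complex) \<Rightarrow> real" where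
  "lognorm q u = sup_part u + holder_part q u"

definition Clog :: "real \<Rightarrow> (cvec \<Rightarrow> complex) set" where
  "Clog q = {u. (\<forall>v c. v \<noteq> 0 \<longrightarrow> c \<noteq> 0 \<longrightarrow> u (c *s v) = u v)
      \<and> bdd_above ((\<lambda>v. cmod (u v)) ` {v. v \<noteq> 0})
      \<and> bdd_above ((\<lambda>(v,w). cmod (u v - u w) * logstar (pdist v w) powr q) `
              {(v,w). v \<noteq> 0 \<and> w \<noteq> 0 \<and> pdist v w \<noteq> 0})}"

end

theory Submission
  imports Defs
begin


definition det2 :: "cvec \<Rightarrow> cvec \<Rightarrow> complex" where
  "det2 v w = v$1 * w$2 - v$2 * w$1"

lemma nv2: "norm (v::cvec) ^ 2 = cmod (v$1)^2 + cmod (v$2)^2"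
  by (simp add: norm_vec_def L2_set_def sum_2)

lemma nv: "norm (v::cvec) = sqrt (cmod (v$1)^2 + cmod (v$2)^2)"
  by (simp add: norm_vec_def L2_set_def sum_2)

lemma mv1: "((g::cmat) *v v)$1 = g$1$1 * v$1 + g$1$2 * v$2"
  by (simp add: matrix_vector_mult_def sum_2)
lemma mv2: "((g::cmat) *v v)$2 = g$2$1 * v$1 + g$2$2 * v$2"
  by (simp add: matrix_vector_mult_def sum_2)

lemma cs2: "(a::real)*b + c*d \<le> sqrt (a^2+c^2) * sqrt (b^2+d^2)"
proof -
  have "(a*b+c*d)^2 \<le> (a^2+c^2)*(b^2+d^2)"
  proof -
    have "(a^2+c^2)*(b^2+d^2) - (a*b+c*d)^2 = (a*d-c*b)^2"
      by (simp add: power2_eq_square algebra_simps)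
    thus ?thesis by (metis diff_ge_0_iff_ge zero_le_power2)
  qed
  hence "\<bar>a*b+c*d\<bar> \<le> sqrt ((a^2+c^2)*(b^2+d^2))"
    by (simp add: real_le_rsqrt)
  thus ?thesis by (simp add: real_sqrt_mult)
qed

lemma det2_le: "cmod (det2 v w) \<le> norm v * norm w"
proof -
  have "cmod (det2 v w) \<le> cmod (v$1) * cmod (w$2) + cmod (v$2) * cmod (w$1)"
    unfolding det2_def by (metis norm_mult norm_triangle_ineq4)
  also have "\<dots> \<le> sqrt (cmod (v$1)^2 + cmod (v$2)^2) * sqrt (cmod (w$2)^2 + cmod (w$1)^2)"
    by (rule cs2)
  finally show ?thesis by (simp add: nv add.commute)
qed

lemma det2_mult: "det2 (g *v v) (g *v w) = det g * det2 v w"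
  by (simp add: det2_def mv1 mv2 det_2 algebra_simps)

lemma det2_self: "det2 v v = 0" by (simp add: det2_def mult.commute)

lemma det2_scale: "det2 (c *s v) w = c * det2 v w" "det2 v (c *s w) = c * det2 v w"
  by (simp_all add: det2_def algebra_simps)

lemma opnorm_bound: "norm (g *v v) \<le> opnorm g * norm v"
  unfolding opnorm_def by (rule onorm) simp

lemma perp_exists:
  assumes "v \<noteq> (0::cvec)"
  shows "\<exists>w. w \<noteq> 0 \<and> norm w = norm v \<and> cmod (det2 v w) = norm v * norm w"
proof -
  define w :: cvec where "w = vector [- cnj (v$2), cnj (v$1)]"
  have w1: "w$1 = - cnj (v$2)" and w2: "w$2 = cnj (v$1)" by (simp_all add: w_def)
  have nw: "norm w = norm v" by (simp add: nv w1 w2 add.commute)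
  have "det2 v w = of_real (cmod (v$1)^2 + cmod (v$2)^2)"
  proof -
    have "det2 v w = v$1 * cnj (v$1) + v$2 * cnj (v$2)" by (simp add: det2_def w1 w2)
    also have "\<dots> = of_real (cmod (v$1)^2) + of_real (cmod (v$2)^2)"
      by (simp only: complex_norm_square)
    finally show ?thesis by (simp only: of_real_add)
  qed
  hence "cmod (det2 v w) = norm v ^2" by (simp only: nv2 norm_of_real) simp
  moreover have "w \<noteq> 0" using assms nw by auto
  ultimately show ?thesis using nw by (auto simp: power2_eq_square)
qed

lemma pdist_det2: "pdist v w = cmod (det2 v w) / (norm v * norm w)"
  by (simp add: pdist_def det2_def)

lemma pdist_nonneg: "pdist v w \<ge> 0" by (simp add: pdist_def)

lemma pdist_le1: "pdist v w \<le> 1"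
proof (cases "norm v * norm w = 0")
  case True thus ?thesis by (auto simp: pdist_def)
next
  case False
  hence "norm v * norm w > 0" by (simp add: less_le)
  thus ?thesis using det2_le[of v w] by (simp add: pdist_det2 divide_le_eq_1)
qed

lemma opnorm_nonneg: "opnorm g \<ge> 0"
  unfolding opnorm_def by (rule onorm_pos_le) simp

lemma lower_bound:
  assumes "det g = 1" "v \<noteq> 0"
  shows "norm v \<le> opnorm g * norm (g *v v)"
proof -
  obtain w where w: "w \<noteq> 0" "cmod (det2 v w) = norm v * norm w" using perp_exists[OF assms(2)] by blast
  have "norm v * norm w = cmod (det2 (g *v v) (g *v w))" using w assms by (simp add: det2_mult)
  also have "\<dots> \<le> norm (g *v v) * norm (g *v w)" by (rule det2_le)
  also have "\<dots> \<le> norm (g *v v) * (opnorm g * norm w)"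
    by (intro mult_left_mono opnorm_bound) simp
  finally have "norm v * norm w \<le> (opnorm g * norm (g *v v)) * norm w" by (simp add: algebra_simps)
  thus ?thesis using w(1) by simp
qed

lemma opnorm_ge1:
  assumes "det g = 1"
  shows "opnorm g \<ge> 1"
proof -
  define v :: cvec where "v = axis 1 1"
  have v: "v \<noteq> 0" by (simp add: v_def)
  have "norm v \<le> opnorm g * norm (g *v v)" by (rule lower_bound[OF assms v])
  also have "\<dots> \<le> opnorm g * (opnorm g * norm v)"
    by (intro mult_left_mono opnorm_bound opnorm_nonneg)
  finally have "1 * norm v \<le> (opnorm g)^2 * norm v" by (simp add: power2_eq_square algebra_simps)
  hence "1 \<le> (opnorm g)^2" using v by simp
  thus ?thesis using opnorm_nonneg[of g] abs_le_square_iff[of 1 "opnorm g"] by simp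
qed

lemma gv_nonzero: "det (g::cmat) = 1 \<Longrightarrow> v \<noteq> 0 \<Longrightarrow> g *v v \<noteq> 0"
  using lower_bound[of g v] by auto

lemma cmod_det2_g: "det g = 1 \<Longrightarrow> cmod (det2 (g *v v) (g *v w)) = cmod (det2 v w)"
  by (simp add: det2_mult)

lemma pdist_g:
  assumes "det g = 1" "v \<noteq> 0" "w \<noteq> 0"
  shows "pdist (g *v v) (g *v w) \<le> (opnorm g)^2 * pdist v w"
proof -
  let ?N = "opnorm g"
  have N: "?N \<ge> 1" by (rule opnorm_ge1[OF assms(1)])
  have a: "norm v \<le> ?N * norm (g *v v)" "norm w \<le> ?N * norm (g *v w)"
    using lower_bound assms by auto
  have pos: "norm v * norm w > 0" using assms by simp
  have "norm v * norm w \<le> (?N * norm (g *v v)) * (?N * norm (g *v w))"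
    using a by (intro mult_mono) (auto simp: opnorm_nonneg)
  hence le: "norm v * norm w \<le> ?N^2 * (norm (g *v v) * norm (g *v w))"
    by (simp add: power2_eq_square algebra_simps)
  have "pdist (g *v v) (g *v w) = cmod (det2 v w) / (norm (g *v v) * norm (g *v w))"
    by (simp add: pdist_det2 cmod_det2_g[OF assms(1)])
  also have "\<dots> \<le> cmod (det2 v w) / (norm v * norm w / ?N^2)"
  proof (rule divide_left_mono)
    have p2: "norm (g *v v) * norm (g *v w) > 0"
      using gv_nonzero[OF assms(1) assms(2)] gv_nonzero[OF assms(1) assms(3)] by simp
    show "norm v * norm w / ?N^2 \<le> norm (g *v v) * norm (g *v w)"
      using le N by (simp add: divide_le_eq mult.commute)
    show "0 < norm (g *v v) * norm (g *v w) * (norm v * norm w / ?N^2)"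
      using p2 pos N by simp
  qed simp
  also have "\<dots> = ?N^2 * pdist v w" by (simp add: pdist_det2)
  finally show ?thesis .
qed

lemma cocycle_bound:
  assumes "det g = 1" "v \<noteq> 0"
  shows "\<bar>cocycle g v\<bar> \<le> ln (opnorm g)"
proof -
  let ?N = "opnorm g"
  have N: "?N \<ge> 1" by (rule opnorm_ge1[OF assms(1)])
  have nz: "norm (g *v v) > 0" using gv_nonzero[OF assms] by simp
  have nv: "norm v > 0" using assms by simp
  have up: "norm (g *v v) / norm v \<le> ?N" using opnorm_bound[of g v] nv by (simp add: divide_le_eq)
  have lo: "1 / ?N \<le> norm (g *v v) / norm v" using lower_bound[OF assms] nv N
    by (simp add: field_simps)
  have "ln (norm (g *v v) / norm v) \<le> ln ?N" by (subst ln_le_cancel_iff) (use up nz nv N in auto)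
  moreover have "- ln ?N \<le> ln (norm (g *v v) / norm v)"
    using ln_le_cancel_iff[of "1/?N" "norm (g *v v) / norm v"] lo N nz nv by (simp add: ln_div)
  ultimately show ?thesis unfolding cocycle_def by linarith
qed


definition ip :: "cvec \<Rightarrow> cvec \<Rightarrow> complex" where
  "ip v w = v$1 * cnj (w$1) + v$2 * cnj (w$2)"

lemma lagrange: "cmod (ip v w)^2 + cmod (det2 v w)^2 = norm v^2 * norm w^2"
proof -
  have e: "ip v w * cnj (ip v w) + det2 v w * cnj (det2 v w)
      = (v$1 * cnj (v$1) + v$2 * cnj (v$2)) * (w$1 * cnj (w$1) + w$2 * cnj (w$2))"
    by (simp add: ip_def det2_def algebra_simps)
  have "complex_of_real (cmod (ip v w)^2 + cmod (det2 v w)^2) = complex_of_real (norm v^2 * norm w^2)"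
    unfolding of_real_add of_real_mult nv2 complex_norm_square e by simp
  thus ?thesis by (simp only: of_real_eq_iff)
qed

lemma mv_scale: "(g::cmat) *v (c *s w) = c *s (g *v w)"
  by (simp add: vec_eq_iff forall_2 mv1 mv2 algebra_simps)

lemma norm_scale: "norm (c *s (w::cvec)) = cmod c * norm w"
proof -
  have "norm (c *s w) = sqrt (cmod c ^2 * (cmod (w$1)^2 + cmod (w$2)^2))"
    by (simp add: nv norm_mult power_mult_distrib algebra_simps)
  thus ?thesis by (simp add: real_sqrt_mult nv)
qed

lemma cocycle_scale: "c \<noteq> 0 \<Longrightarrow> cocycle g (c *s w) = cocycle g w"
  by (simp add: cocycle_def mv_scale norm_scale)

lemma cmod_diff_sq: "cmod (a - b)^2 = cmod a^2 + cmod b^2 - 2 * Re (a * cnj b)"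
  by (simp only: cmod_power2) (simp add: power2_eq_square algebra_simps)

lemma ln_diff_bound:
  fixes x y m :: real
  assumes "m > 0" "m \<le> x" "m \<le> y"
  shows "\<bar>ln x - ln y\<bar> \<le> \<bar>x - y\<bar> / m"
proof -
  have x: "x > 0" using assms by linarith
  have y: "y > 0" using assms by linarith
  have "ln x - ln y = ln (x / y)" using x y by (simp add: ln_div)
  also have "\<dots> \<le> x / y - 1" using x y by (intro ln_le_minus_one) simp
  also have "\<dots> = (x - y) / y" using y by (simp add: field_simps)
  also have "\<dots> \<le> \<bar>x - y\<bar> / m" using assms y
    by (meson abs_ge_self abs_ge_zero frac_le order_trans)
  finally have 1: "ln x - ln y \<le> \<bar>x - y\<bar> / m" .
  have "ln y - ln x = ln (y / x)" using x y by (simp add: ln_div)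
  also have "\<dots> \<le> y / x - 1" using x y by (intro ln_le_minus_one) simp
  also have "\<dots> = (y - x) / x" using x by (simp add: field_simps)
  also have "\<dots> \<le> \<bar>x - y\<bar> / m" using assms x
    by (metis abs_ge_zero abs_minus_commute abs_ge_self frac_le order_trans)
  finally have 2: "ln y - ln x \<le> \<bar>x - y\<bar> / m" .
  show ?thesis using 1 2 by linarith
qed

lemma cocycle_lip:
  assumes g: "det g = 1" and v: "v \<noteq> 0" and w: "w \<noteq> 0" and d1: "pdist v w < 1"
  shows "\<bar>cocycle g v - cocycle g w\<bar> \<le> 2 * (opnorm g)^2 * pdist v w"
proof -
  let ?N = "opnorm g"
  have N: "?N \<ge> 1" by (rule opnorm_ge1[OF g])
  have nv: "norm v > 0" and nw: "norm w > 0" using v w by auto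
  define d where "d = pdist v w"
  have d0: "d \<ge> 0" by (simp add: d_def pdist_nonneg)
  have dd: "cmod (det2 v w) = d * (norm v * norm w)"
    using nv nw by (simp add: d_def pdist_det2)
  have L: "cmod (ip v w)^2 + d^2 * (norm v * norm w)^2 = (norm v * norm w)^2"
    using lagrange[of v w] dd by (simp add: power_mult_distrib)
  have ipnz: "ip v w \<noteq> 0"
  proof
    assume "ip v w = 0"
    hence "d^2 = 1" using L nv nw by simp
    thus False using d1 d0 unfolding d_def by (simp add: power2_eq_1_iff)
  qed
  define r where "r = cmod (ip v w) / (norm v * norm w)"
  have r0: "r \<ge> 0" by (simp add: r_def)
  have P: "norm v * norm w > 0" using nv nw by simp
  have "r^2 + d^2 = (cmod (ip v w)^2 + d^2 * (norm v * norm w)^2) / (norm v * norm w)^2"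
    using P v w by (simp add: r_def power_divide add_divide_distrib)
  hence rd: "r^2 + d^2 = 1" unfolding L using P v w by simp
  hence "r^2 \<le> 1^2" by (metis le_add_same_cancel1 zero_le_power2 power_one)
  hence r1: "r \<le> 1" by (rule power2_le_imp_le) simp
  define c where "c = ip v w / of_real (cmod (ip v w)) * of_real (norm v / norm w)"
  have cnz: "c \<noteq> 0" using ipnz nv nw by (simp add: c_def)
  have cm: "cmod c = norm v / norm w" using ipnz nv nw by (simp add: c_def norm_mult norm_divide)
  define w' where "w' = c *s w"
  have nw': "norm w' = norm v" using cm nw by (simp add: w'_def norm_scale)
  have ipw': "ip v w' = of_real (cmod (ip v w) * (norm v / norm w))"
  proof -
    have "ip v w' = cnj c * ip v w" by (simp add: ip_def w'_def algebra_simps)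
    also have "\<dots> = (ip v w * cnj (ip v w)) / of_real (cmod (ip v w)) * of_real (norm v / norm w)"
      by (simp add: c_def)
    also have "\<dots> = of_real (cmod (ip v w)^2) / of_real (cmod (ip v w)) * of_real (norm v / norm w)"
      by (simp only: complex_norm_square)
    also have "\<dots> = of_real (cmod (ip v w) * (norm v / norm w))"
      using ipnz by (simp add: power2_eq_square)
    finally show ?thesis .
  qed
  have "norm (v - w')^2 = norm v^2 + norm w'^2 - 2 * Re (ip v w')"
    unfolding nv2 vector_minus_component cmod_diff_sq ip_def by (simp add: algebra_simps)
  also have "\<dots> = 2 * norm v^2 * (1 - r)"
  proof -
    have "cmod (ip v w) * (norm v / norm w) = r * norm v^2"
      using nv nw by (simp add: r_def power2_eq_square)
    thus ?thesis by (simp add: ipw' nw' algebra_simps)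
  qed
  also have "\<dots> \<le> 2 * norm v^2 * d^2"
  proof -
    have "r^2 \<le> r" using mult_left_le[OF r1 r0] by (simp add: power2_eq_square)
    hence "1 - r \<le> d^2" using rd by linarith
    thus ?thesis using mult_left_mono[of "1 - r" "d^2" "2 * norm v^2"] by simp
  qed
  also have "\<dots> = 2 * (norm v * d)^2" by (simp add: power_mult_distrib)
  also have "\<dots> \<le> 4 * (norm v * d)^2" by simp
  also have "\<dots> = (2 * norm v * d)^2" by (simp add: power_mult_distrib)
  finally have vw2: "norm (v - w')^2 \<le> (2 * norm v * d)^2" .
  have "0 \<le> 2 * norm v * d" using d0 nv by simp
  with vw2 have vw: "norm (v - w') \<le> 2 * norm v * d" by (rule power2_le_imp_le)
  have w'nz: "w' \<noteq> 0" using nw' nv by (metis norm_zero less_irrefl)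
  have m: "norm v / ?N \<le> norm (g *v v)" "norm v / ?N \<le> norm (g *v w')"
    using lower_bound[OF g v] lower_bound[OF g w'nz] nw' N by (auto simp: divide_le_eq mult.commute)
  have "cocycle g v - cocycle g w = cocycle g v - cocycle g w'"
    by (simp add: w'_def cocycle_scale cnz)
  also have "\<dots> = ln (norm (g *v v)) - ln (norm (g *v w'))"
    using gv_nonzero[OF g v] gv_nonzero[OF g w'nz] nv nw'
    by (simp add: cocycle_def ln_div)
  finally have "\<bar>cocycle g v - cocycle g w\<bar> \<le> \<bar>norm (g *v v) - norm (g *v w')\<bar> / (norm v / ?N)"
    using ln_diff_bound[OF _ m] nv N by simp
  also have "\<bar>norm (g *v v) - norm (g *v w')\<bar> \<le> norm (g *v (v - w'))"
    by (metis matrix_vector_mult_diff_distrib norm_triangle_ineq3)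
  hence "\<bar>norm (g *v v) - norm (g *v w')\<bar> / (norm v / ?N) \<le> norm (g *v (v - w')) / (norm v / ?N)"
    using nv N by (intro divide_right_mono) auto
  also have "norm (g *v (v - w')) \<le> ?N * (2 * norm v * d)"
    using opnorm_bound[of g "v - w'"] mult_left_mono[OF vw, of ?N] N by linarith
  hence "norm (g *v (v - w')) / (norm v / ?N) \<le> ?N * (2 * norm v * d) / (norm v / ?N)"
    using nv N by (intro divide_right_mono) auto
  also have "\<dots> = 2 * ?N^2 * d" using nv N by (simp add: field_simps power2_eq_square)
  finally show ?thesis by (simp add: d_def)
qed


lemma elem_bound:
  fixes t q :: real
  assumes t: "t \<ge> 0" and q: "q > 0"
  shows "(1 + t) powr q \<le> (max 1 (2*q)) powr q * exp (t/2)"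
proof -
  define M where "M = max 1 (2*q)"
  have M1: "M \<ge> 1" and M2: "M \<ge> 2*q" by (auto simp: M_def)
  have "1 + t \<le> M * (1 + t/M)" using M1 by (simp add: field_simps)
  hence "ln (1 + t) \<le> ln (M * (1 + t/M))" using t M1 by (subst ln_le_cancel_iff) auto
  also have "\<dots> = ln M + ln (1 + t/M)"
  proof -
    have "1 + t/M > 0" using t M1 by (simp add: add_pos_nonneg)
    thus ?thesis using M1 by (subst ln_mult) auto
  qed
  also have "ln (1 + t/M) \<le> t/M" using t M1 by (intro ln_add_one_self_le_self) auto
  finally have l: "ln (1 + t) \<le> ln M + t/M" by simp
  have "q * (t/M) \<le> t/2"
  proof -
    have "q * (t/M) = t * (q/M)" by simp
    also have "q/M \<le> 1/2" using M1 M2 by (simp add: divide_le_eq)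
    hence "t * (q/M) \<le> t * (1/2)" using t by (intro mult_left_mono) auto
    finally show ?thesis by simp
  qed
  hence "q * ln (1 + t) \<le> q * ln M + t/2" using l q
    by (smt (verit, best) mult_left_mono distrib_left)
  hence "exp (q * ln (1 + t)) \<le> exp (q * ln M + t/2)" by simp
  moreover have "(1+t) powr q = exp (q * ln (1+t))" using t by (simp add: powr_def mult.commute)
  moreover have "M powr q = exp (q * ln M)" using M1 by (simp add: powr_def mult.commute)
  ultimately have "(1 + t) powr q \<le> M powr q * exp (t/2)" by (simp add: exp_add)
  thus ?thesis by (simp add: M_def)
qed

lemma sqrt_log_bound:
  fixes d q :: real
  assumes d: "0 < d" "d \<le> 1" and q: "q > 0"
  shows "sqrt d * (1 - ln d) powr q \<le> (max 1 (2*q)) powr q"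
proof -
  define t where "t = - ln d"
  have t: "t \<ge> 0" using d by (simp add: t_def)
  have "(1 - ln d) powr q \<le> (max 1 (2*q)) powr q * exp (t/2)"
    using elem_bound[OF t q] by (simp add: t_def)
  moreover have "sqrt d * exp (t/2) = 1"
  proof -
    have "sqrt d = d powr (1/2)" using d by (simp add: powr_half_sqrt)
    also have "\<dots> = exp (ln d / 2)" using d by (simp add: powr_def)
    finally have "sqrt d = exp (ln d / 2)" .
    thus ?thesis by (simp add: t_def exp_add[symmetric])
  qed
  ultimately have "sqrt d * (1 - ln d) powr q \<le> sqrt d * ((max 1 (2*q)) powr q * exp (t/2))"
    using d by (intro mult_left_mono) auto
  also have "\<dots> = (max 1 (2*q)) powr q * (sqrt d * exp (t/2))" by simp
  finally show ?thesis using \<open>sqrt d * exp (t/2) = 1\<close> by simp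
qed


lemma logstar_eq: "0 < d \<Longrightarrow> d \<le> 1 \<Longrightarrow> logstar d = 1 - ln d"
  by (simp add: logstar_def)

lemma pdist_pos: "pdist v w \<noteq> 0 \<Longrightarrow> 0 < pdist v w"
  using pdist_nonneg[of v w] by simp

lemma sigma_term:
  assumes g: "det g = 1" and v: "v \<noteq> 0" and w: "w \<noteq> 0" and dn: "pdist v w \<noteq> 0" and q: "q > 0"
  shows "min 1 \<bar>cocycle g v - cocycle g w\<bar> * logstar (pdist v w) powr q
     \<le> 2 * (max 1 (2*q)) powr q + (1 + 4 * ln (opnorm g)) powr q"
proof -
  let ?N = "opnorm g"
  define d where "d = pdist v w"
  define l where "l = ln ?N"
  have N: "?N \<ge> 1" by (rule opnorm_ge1[OF g])
  have l0: "l \<ge> 0" using N by (simp add: l_def)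
  have d0: "0 < d" using pdist_pos[OF dn] by (simp add: d_def)
  have d1: "d \<le> 1" by (simp add: d_def pdist_le1)
  have a: "logstar d = 1 - ln d" by (rule logstar_eq[OF d0 d1])
  have M0: "0 \<le> 2 * (max 1 (2*q)) powr q" by simp
  have R1: "1 \<le> (1 + 4 * l) powr q" using l0 q by (intro ge_one_powr_ge_zero) auto
  have mn0: "0 \<le> min 1 \<bar>cocycle g v - cocycle g w\<bar>" by simp
  have mn1: "min 1 \<bar>cocycle g v - cocycle g w\<bar> \<le> 1" by simp
  have "min 1 \<bar>cocycle g v - cocycle g w\<bar> * logstar d powr q
     \<le> 2 * (max 1 (2*q)) powr q + (1 + 4 * l) powr q"
  proof (cases "d = 1")
    case True
    hence "logstar d powr q = 1" using a by simp
    hence "min 1 \<bar>cocycle g v - cocycle g w\<bar> * logstar d powr q = min 1 \<bar>cocycle g v - cocycle g w\<bar>"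
      by simp
    with mn1 R1 M0 show ?thesis by linarith
  next
    case False
    hence dl1: "d < 1" using d1 by simp
    show ?thesis
    proof (cases "d \<le> exp (- 4 * l)")
      case True
      have Nl: "?N = exp l" using N by (simp add: l_def)
      have "exp (4 * l) * d \<le> 1" using True by (simp add: exp_minus field_simps)
      hence "(?N^2 * d)^2 \<le> d"
      proof -
        assume h: "exp (4 * l) * d \<le> 1"
        have "(?N^2 * d)^2 = (exp (4*l) * d) * d"
          by (simp add: Nl power2_eq_square exp_add[symmetric] algebra_simps)
        also have "\<dots> \<le> 1 * d" using h d0 by (intro mult_right_mono) auto
        finally show ?thesis by simp
      qed
      hence "?N^2 * d \<le> sqrt d"
        by (rule real_le_rsqrt)
      have lip: "\<bar>cocycle g v - cocycle g w\<bar> \<le> 2 * ?N^2 * d"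
        using cocycle_lip[OF g v w] dl1 by (simp add: d_def)
      hence "min 1 \<bar>cocycle g v - cocycle g w\<bar> \<le> 2 * sqrt d"
        using \<open>?N^2 * d \<le> sqrt d\<close> by linarith
      hence "min 1 \<bar>cocycle g v - cocycle g w\<bar> * logstar d powr q \<le> 2 * sqrt d * logstar d powr q"
        by (intro mult_right_mono) auto
      also have "\<dots> = 2 * (sqrt d * (1 - ln d) powr q)" using a by simp
      also have "\<dots> \<le> 2 * (max 1 (2*q)) powr q"
        using sqrt_log_bound[OF d0 d1 q] by simp
      finally show ?thesis using R1 by linarith
    next
      case False
      hence "exp (- 4 * l) < d" by simp
      hence "ln (exp (- 4 * l)) < ln d" using d0 by (subst ln_less_cancel_iff) auto
      hence "ln d > - 4 * l" by simp
      hence le: "logstar d \<le> 1 + 4 * l" using a by simp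
      have "ln d \<le> 0" using d0 d1 by simp
      hence "0 \<le> logstar d" using a by simp
      hence "logstar d powr q \<le> (1 + 4 * l) powr q" using le q by (intro powr_mono2) auto
      hence "min 1 \<bar>cocycle g v - cocycle g w\<bar> * logstar d powr q \<le> 1 * (1 + 4 * l) powr q"
        using mn0 mn1 by (intro mult_mono) auto
      thus ?thesis using M0 by linarith
    qed
  qed
  thus ?thesis by (simp add: d_def l_def)
qed

lemma u_term:
  assumes g: "det g = 1" and v: "v \<noteq> 0" and w: "w \<noteq> 0" and dn: "pdist v w \<noteq> 0" and q: "q > 0"
    and A: "A \<ge> 0" and B: "B \<ge> 0"
    and F1: "\<And>x. x \<noteq> 0 \<Longrightarrow> cmod (u x) \<le> A"
    and F2: "\<And>x y. x \<noteq> 0 \<Longrightarrow> y \<noteq> 0 \<Longrightarrow> pdist x y \<noteq> 0 \<Longrightarrow>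
               cmod (u x - u y) * logstar (pdist x y) powr q \<le> B"
  shows "cmod (u (g *v v) - u (g *v w)) * logstar (pdist v w) powr q
           \<le> 2 powr q * B + 2 * A * (4 * ln (opnorm g)) powr q"
proof -
  let ?N = "opnorm g"
  define d where "d = pdist v w"
  define d' where "d' = pdist (g *v v) (g *v w)"
  define l where "l = ln ?N"
  define D where "D = cmod (u (g *v v) - u (g *v w))"
  have N: "?N \<ge> 1" by (rule opnorm_ge1[OF g])
  have l0: "l \<ge> 0" using N by (simp add: l_def)
  have gv: "g *v v \<noteq> 0" and gw: "g *v w \<noteq> 0" using gv_nonzero[OF g] v w by auto
  have d0: "0 < d" using pdist_pos[OF dn] by (simp add: d_def)
  have d1: "d \<le> 1" by (simp add: d_def pdist_le1)
  have dn': "d' \<noteq> 0"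
    using dn gv gw by (simp add: d'_def pdist_det2 cmod_det2_g[OF g])
  have d'0: "0 < d'" using pdist_pos dn' by (simp add: d'_def)
  have d'1: "d' \<le> 1" by (simp add: d'_def pdist_le1)
  have dd: "d' \<le> ?N^2 * d" unfolding d_def d'_def by (rule pdist_g[OF g v w])
  have "ln d' \<le> ln (?N^2 * d)" using dd d'0 by (subst ln_le_cancel_iff) auto
  also have "\<dots> = 2 * l + ln d" using N d0 by (simp add: ln_mult ln_realpow l_def)
  finally have lnd': "ln d' \<le> 2 * l + ln d" .
  define a where "a = 1 - ln d"
  define a' where "a' = 1 - ln d'"
  have la: "logstar d = a" by (simp add: a_def logstar_eq[OF d0 d1])
  have la': "logstar d' = a'" by (simp add: a'_def logstar_eq[OF d'0 d'1])
  have a1: "a \<ge> 1" using d0 d1 by (simp add: a_def)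
  have aa': "a' \<ge> a - 2 * l" using lnd' by (simp add: a_def a'_def)
  have FD: "D * a' powr q \<le> B" using F2[OF gv gw dn'[unfolded d'_def]] la' by (simp add: D_def d'_def)
  have D0: "D \<ge> 0" by (simp add: D_def)
  have D2: "D \<le> 2 * A"
    using F1[OF gv] F1[OF gw] norm_triangle_ineq4[of "u (g *v v)" "u (g *v w)"] by (simp add: D_def)
  have t1: "0 \<le> 2 powr q * B" using B by simp
  have t2: "0 \<le> 2 * A * (4 * l) powr q" using A by simp
  have "D * a powr q \<le> 2 powr q * B + 2 * A * (4 * l) powr q"
  proof (cases "a \<ge> 4 * l")
    case True
    hence "a \<le> 2 * a'" using aa' by simp
    hence "a powr q \<le> (2 * a') powr q" using a1 q by (intro powr_mono2) auto
    also have "\<dots> = 2 powr q * a' powr q" using a1 aa' True by (subst powr_mult) auto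
    finally have "D * a powr q \<le> D * (2 powr q * a' powr q)" using D0 by (intro mult_left_mono)
    also have "\<dots> = 2 powr q * (D * a' powr q)" by simp
    also have "\<dots> \<le> 2 powr q * B" using FD by (intro mult_left_mono) auto
    finally show ?thesis using t2 by simp
  next
    case False
    hence "a powr q \<le> (4 * l) powr q" using a1 q by (intro powr_mono2) auto
    hence "D * a powr q \<le> (2 * A) * (4 * l) powr q" using D0 D2 by (intro mult_mono) auto
    thus ?thesis using t1 by simp
  qed
  moreover have "logstar (pdist v w) = a" using la by (simp add: d_def)
  ultimately show ?thesis by (simp add: D_def l_def)
qed


definition Kc :: "real \<Rightarrow> real" where
  "Kc q = 2 powr q + 4 * 4 powr q + 4 * (max 1 (2*q)) powr q"

lemma Kc_ge1: "q > 0 \<Longrightarrow> Kc q \<ge> 1"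
proof -
  assume q: "q > 0"
  have "1 \<le> (2::real) powr q" using q by (intro ge_one_powr_ge_zero) auto
  moreover have "0 \<le> 4 * (4::real) powr q" "0 \<le> 4 * (max 1 (2*q)) powr q" by auto
  ultimately show ?thesis unfolding Kc_def by linarith
qed

lemma norm_split:
  fixes a b x y :: complex
  shows "cmod (a * x - b * y) \<le> cmod a * cmod (x - y) + cmod (a - b) * cmod y"
proof -
  have "a * x - b * y = a * (x - y) + (a - b) * y" by (simp add: algebra_simps)
  hence "cmod (a * x - b * y) \<le> cmod (a * (x - y)) + cmod ((a - b) * y)"
    by (metis norm_triangle_ineq)
  thus ?thesis by (simp add: norm_mult)
qed

lemma pointwise:
  fixes \<phi> :: "real \<Rightarrow> complex"
  assumes g: "det g = 1" and v: "v \<noteq> 0" and w: "w \<noteq> 0" and dn: "pdist v w \<noteq> 0" and q: "q > 0"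
    and A: "A \<ge> 0" and B: "B \<ge> 0"
    and F1: "\<And>x. x \<noteq> 0 \<Longrightarrow> cmod (u x) \<le> A"
    and F2: "\<And>x y. x \<noteq> 0 \<Longrightarrow> y \<noteq> 0 \<Longrightarrow> pdist x y \<noteq> 0 \<Longrightarrow>
               cmod (u x - u y) * logstar (pdist x y) powr q \<le> B"
    and H1: "\<And>s. cmod (\<phi> s) \<le> \<alpha> + \<beta> * \<bar>s\<bar>"
    and H2: "\<And>s t. cmod (\<phi> s - \<phi> t) \<le> \<gamma> * (1 + \<bar>s\<bar> + \<bar>t\<bar>) * min 1 \<bar>s - t\<bar>"
    and al: "\<alpha> \<ge> 0" and be: "\<beta> \<ge> 0" and ga: "\<gamma> \<ge> 0"
  shows "cmod (\<phi> (cocycle g v) * u (g *v v) - \<phi> (cocycle g w) * u (g *v w)) * logstar (pdist v w) powr q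
     \<le> (\<alpha> + \<beta> + \<gamma>) * Kc q * (A + B) * ((1 + ln (opnorm g)) * (1 + ln (opnorm g)) powr q)"
proof -
  define l where "l = ln (opnorm g)"
  define m where "m = 1 + l"
  define X where "X = m powr q"
  define P where "P = logstar (pdist v w) powr q"
  define s where "s = cocycle g v"
  define t where "t = cocycle g w"
  define M where "M = (max 1 (2*q)) powr q"
  have N: "opnorm g \<ge> 1" by (rule opnorm_ge1[OF g])
  have l0: "l \<ge> 0" using N by (simp add: l_def)
  have m1: "m \<ge> 1" using l0 by (simp add: m_def)
  have X1: "X \<ge> 1" unfolding X_def using m1 q by (intro ge_one_powr_ge_zero) auto
  have P0: "P \<ge> 0" by (simp add: P_def)
  have M0: "M \<ge> 0" by (simp add: M_def)
  have sl: "\<bar>s\<bar> \<le> l" using cocycle_bound[OF g v] by (simp add: s_def l_def)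
  have tl: "\<bar>t\<bar> \<le> l" using cocycle_bound[OF g w] by (simp add: t_def l_def)
  have gv: "g *v v \<noteq> 0" and gw: "g *v w \<noteq> 0" using gv_nonzero[OF g] v w by auto
  define Du where "Du = cmod (u (g *v v) - u (g *v w))"
  define U where "U = 2 powr q * B + 2 * A * (4 * l) powr q"
  have uT: "Du * P \<le> U"
    using u_term[OF g v w dn q A B F1 F2] by (simp add: Du_def P_def U_def l_def)
  define Sg where "Sg = min 1 \<bar>s - t\<bar>"
  have Sg0: "Sg \<ge> 0" by (simp add: Sg_def)
  have sT: "Sg * P \<le> 2 * M + (1 + 4 * l) powr q"
    using sigma_term[OF g v w dn q] by (simp add: Sg_def P_def s_def t_def M_def l_def)
  have u2: "cmod (u (g *v w)) \<le> A" by (rule F1[OF gw])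
  have 4: "(4 * l) powr q \<le> 4 powr q * X"
  proof -
    have "(4 * l) powr q \<le> (4 * m) powr q" using l0 q by (intro powr_mono2) (auto simp: m_def)
    also have "\<dots> = 4 powr q * X" using m1 by (simp add: X_def powr_mult)
    finally show ?thesis .
  qed
  have 41: "(1 + 4 * l) powr q \<le> 4 powr q * X"
  proof -
    have "(1 + 4 * l) powr q \<le> (4 * m) powr q" using l0 q by (intro powr_mono2) (auto simp: m_def)
    also have "\<dots> = 4 powr q * X" using m1 by (simp add: X_def powr_mult)
    finally show ?thesis .
  qed
  have p2: "0 \<le> (2::real) powr q" "0 \<le> (4::real) powr q" by auto
  have Ub: "U \<le> (2 powr q + 2 * 4 powr q) * (A + B) * X"
  proof -
    have bb: "0 \<le> 2 powr q * B" using B by simp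
    have "2 powr q * B \<le> 2 powr q * B * X" using mult_left_mono[OF X1 bb] by simp
    moreover have "2 * A * (4 * l) powr q \<le> 2 * A * (4 powr q * X)" using 4 A by (intro mult_left_mono) auto
    moreover have "2 powr q * B * X + 2 * A * (4 powr q * X) \<le> (2 powr q + 2 * 4 powr q) * (A + B) * X"
    proof -
      have "2 powr q * B * X + 2 * A * (4 powr q * X) = (2 powr q * B + 2 * 4 powr q * A) * X" by (simp add: algebra_simps)
      also have "\<dots> \<le> ((2 powr q + 2 * 4 powr q) * (A + B)) * X"
      proof (rule mult_right_mono)
        show "2 powr q * B + 2 * 4 powr q * A \<le> (2 powr q + 2 * 4 powr q) * (A + B)"
          using A B p2 by (simp add: algebra_simps mult_nonneg_nonneg)
      qed (use X1 in auto)
      finally show ?thesis by simp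
    qed
    ultimately show ?thesis unfolding U_def by linarith
  qed
  have Sb: "2 * M + (1 + 4 * l) powr q \<le> (2 * M + 4 powr q) * X"
  proof -
    have "2 * M \<le> 2 * M * X" using X1 M0 by (simp add: mult_le_cancel_left1)
    thus ?thesis using 41 by (simp add: algebra_simps)
  qed
  have ph1: "cmod (\<phi> s) \<le> (\<alpha> + \<beta>) * m"
  proof -
    have "\<beta> * \<bar>s\<bar> \<le> \<beta> * m" using sl be by (intro mult_left_mono) (auto simp: m_def)
    moreover have "\<alpha> \<le> \<alpha> * m" using al m1 by (simp add: mult_le_cancel_left1)
    ultimately show ?thesis using H1[of s] by (simp add: algebra_simps)
  qed
  have ph2: "cmod (\<phi> s - \<phi> t) \<le> \<gamma> * (2 * m) * Sg"
  proof -
    have "\<gamma> * (1 + \<bar>s\<bar> + \<bar>t\<bar>) \<le> \<gamma> * (2 * m)" using sl tl ga by (intro mult_left_mono) (auto simp: m_def)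
    hence "\<gamma> * (1 + \<bar>s\<bar> + \<bar>t\<bar>) * Sg \<le> \<gamma> * (2 * m) * Sg" using Sg0 by (intro mult_right_mono)
    thus ?thesis using H2[of s t] unfolding Sg_def by linarith
  qed
  define K1 where "K1 = 2 powr q + 2 * 4 powr q"
  define K2 where "K2 = 2 * (2 * M + 4 powr q)"
  have K1: "0 \<le> K1" "K1 \<le> Kc q" using p2 by (auto simp: K1_def Kc_def M_def)
  have K2: "0 \<le> K2" "K2 \<le> Kc q" using p2 M0 by (auto simp: K2_def Kc_def M_def)
  have "cmod (\<phi> s * u (g *v v) - \<phi> t * u (g *v w)) * P
      \<le> (cmod (\<phi> s) * Du + cmod (\<phi> s - \<phi> t) * cmod (u (g *v w))) * P"
    using norm_split[of "\<phi> s" "u (g *v v)" "\<phi> t" "u (g *v w)"] P0 by (intro mult_right_mono) (auto simp: Du_def)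
  also have "\<dots> = cmod (\<phi> s) * (Du * P) + cmod (\<phi> s - \<phi> t) * cmod (u (g *v w)) * P"
    by (simp add: algebra_simps)
  also have "\<dots> \<le> ((\<alpha> + \<beta>) * m) * (K1 * (A + B) * X) + (\<gamma> * (2 * m) * Sg) * A * P"
  proof (rule add_mono)
    have "Du * P \<le> K1 * (A + B) * X" using uT Ub by (simp add: K1_def)
    thus "cmod (\<phi> s) * (Du * P) \<le> ((\<alpha> + \<beta>) * m) * (K1 * (A + B) * X)"
      using ph1 al be m1 P0 by (rule_tac mult_mono) (auto simp: Du_def)
    show "cmod (\<phi> s - \<phi> t) * cmod (u (g *v w)) * P \<le> (\<gamma> * (2 * m) * Sg) * A * P"
      using ph2 u2 P0 Sg0 ga m1 by (intro mult_right_mono mult_mono) auto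
  qed
  also have "(\<gamma> * (2 * m) * Sg) * A * P = (\<gamma> * (2 * m) * A) * (Sg * P)" by (simp add: algebra_simps)
  also have "\<dots> \<le> (\<gamma> * (2 * m) * A) * ((2 * M + 4 powr q) * X)"
    using sT Sb ga m1 A by (intro mult_left_mono) auto
  also have "((\<alpha> + \<beta>) * m) * (K1 * (A + B) * X) + (\<gamma> * (2 * m) * A) * ((2 * M + 4 powr q) * X)
      = (\<alpha> + \<beta>) * K1 * (A + B) * (m * X) + \<gamma> * K2 * A * (m * X)"
    by (simp add: K2_def algebra_simps)
  also have "\<dots> \<le> (\<alpha> + \<beta>) * Kc q * (A + B) * (m * X) + \<gamma> * Kc q * (A + B) * (m * X)"
  proof (rule add_mono)
    have mX: "0 \<le> m * X" using m1 X1 by simp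
    show "(\<alpha> + \<beta>) * K1 * (A + B) * (m * X) \<le> (\<alpha> + \<beta>) * Kc q * (A + B) * (m * X)"
      using K1 al be A B mX by (intro mult_right_mono mult_left_mono) auto
    show "\<gamma> * K2 * A * (m * X) \<le> \<gamma> * Kc q * (A + B) * (m * X)"
      using K2 ga A B mX by (intro mult_right_mono mult_mono) auto
  qed
  also have "\<dots> = (\<alpha> + \<beta> + \<gamma>) * Kc q * (A + B) * (m * X)" by (simp add: algebra_simps)
  finally show ?thesis by (simp add: s_def t_def P_def m_def X_def l_def)
qed

lemma pointwise_sup:
  fixes \<phi> :: "real \<Rightarrow> complex"
  assumes g: "det g = 1" and v: "v \<noteq> 0" and q: "q > 0"
    and A: "A \<ge> 0" and B: "B \<ge> 0"
    and F1: "\<And>x. x \<noteq> 0 \<Longrightarrow> cmod (u x) \<le> A"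
    and H1: "\<And>s. cmod (\<phi> s) \<le> \<alpha> + \<beta> * \<bar>s\<bar>"
    and al: "\<alpha> \<ge> 0" and be: "\<beta> \<ge> 0" and ga: "\<gamma> \<ge> 0"
  shows "cmod (\<phi> (cocycle g v) * u (g *v v))
     \<le> (\<alpha> + \<beta> + \<gamma>) * Kc q * (A + B) * ((1 + ln (opnorm g)) * (1 + ln (opnorm g)) powr q)"
proof -
  define l where "l = ln (opnorm g)"
  define m where "m = 1 + l"
  define X where "X = m powr q"
  define s where "s = cocycle g v"
  have N: "opnorm g \<ge> 1" by (rule opnorm_ge1[OF g])
  have l0: "l \<ge> 0" using N by (simp add: l_def)
  have m1: "m \<ge> 1" using l0 by (simp add: m_def)
  have X1: "X \<ge> 1" unfolding X_def using m1 q by (intro ge_one_powr_ge_zero) auto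
  have mX: "m \<le> m * X" using m1 X1 by (simp add: mult_le_cancel_left1)
  have sl: "\<bar>s\<bar> \<le> l" using cocycle_bound[OF g v] by (simp add: s_def l_def)
  have gv: "g *v v \<noteq> 0" using gv_nonzero[OF g v] .
  have ph1: "cmod (\<phi> s) \<le> (\<alpha> + \<beta>) * m"
  proof -
    have "\<beta> * \<bar>s\<bar> \<le> \<beta> * m" using sl be by (intro mult_left_mono) (auto simp: m_def)
    moreover have "\<alpha> \<le> \<alpha> * m" using al m1 by (simp add: mult_le_cancel_left1)
    ultimately show ?thesis using H1[of s] by (simp add: algebra_simps)
  qed
  have "cmod (\<phi> s * u (g *v v)) \<le> ((\<alpha> + \<beta>) * m) * A"
    unfolding norm_mult using ph1 F1[OF gv] A al be m1 by (intro mult_mono) auto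
  also have "\<dots> \<le> ((\<alpha> + \<beta> + \<gamma>) * (m * X)) * (Kc q * (A + B))"
  proof (rule mult_mono)
    show "(\<alpha> + \<beta>) * m \<le> (\<alpha> + \<beta> + \<gamma>) * (m * X)"
      using mX al be ga m1 by (intro mult_mono) auto
    show "A \<le> Kc q * (A + B)"
    proof -
      have "A \<le> 1 * (A + B)" using B by simp
      also have "\<dots> \<le> Kc q * (A + B)" using Kc_ge1[OF q] A B by (intro mult_right_mono) auto
      finally show ?thesis .
    qed
  qed (use al be ga m1 X1 A in auto)
  also have "\<dots> = (\<alpha> + \<beta> + \<gamma>) * Kc q * (A + B) * (m * X)" by (simp add: algebra_simps)
  finally show ?thesis by (simp add: s_def m_def X_def l_def)
qed


lemma nvv: "norm (A::cmat)^2 = norm (A$1)^2 + norm (A$2)^2"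
  by (simp add: norm_vec_def L2_set_def sum_2)

lemma row_bound: "cmod (a * x1 + b * x2) \<le> sqrt (cmod a^2 + cmod b^2) * sqrt (cmod x1^2 + cmod x2^2)"
proof -
  have "cmod (a * x1 + b * x2) \<le> cmod a * cmod x1 + cmod b * cmod x2"
    by (metis norm_mult norm_triangle_ineq)
  also have "\<dots> \<le> sqrt (cmod a^2 + cmod b^2) * sqrt (cmod x1^2 + cmod x2^2)" by (rule cs2)
  finally show ?thesis .
qed

lemma mat_norm_bound: "norm ((A::cmat) *v x) \<le> norm A * norm x"
proof -
  have r1: "cmod ((A *v x)$1) \<le> norm (A$1) * norm x"
    unfolding mv1 nv[of "A$1"] nv[of x] by (rule row_bound)
  have r2: "cmod ((A *v x)$2) \<le> norm (A$2) * norm x"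
    unfolding mv2 nv[of "A$2"] nv[of x] by (rule row_bound)
  have "norm (A *v x)^2 = cmod ((A *v x)$1)^2 + cmod ((A *v x)$2)^2" by (rule nv2)
  also have "\<dots> \<le> (norm (A$1) * norm x)^2 + (norm (A$2) * norm x)^2"
    using r1 r2 by (intro add_mono power_mono) auto
  also have "\<dots> = (norm A * norm x)^2" by (simp add: nvv power_mult_distrib algebra_simps)
  finally show ?thesis by (rule power2_le_imp_le) simp
qed

lemma opnorm_le_norm: "opnorm A \<le> norm A"
  unfolding opnorm_def by (rule onorm_le) (rule mat_norm_bound)

lemma opnorm_sub: "opnorm g \<le> opnorm (g - h) + opnorm h"
proof -
  have "opnorm g = onorm (\<lambda>x. (g - h) *v x + h *v x)"
    by (simp add: opnorm_def matrix_vector_mult_diff_rdistrib)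
  also have "\<dots> \<le> opnorm (g - h) + opnorm h"
    unfolding opnorm_def by (rule onorm_triangle) simp_all
  finally show ?thesis .
qed

lemma opnorm_lip: "\<bar>opnorm g - opnorm h\<bar> \<le> norm (g - h)"
proof -
  have "opnorm g - opnorm h \<le> norm (g - h)" using opnorm_sub[of g h] opnorm_le_norm[of "g - h"] by linarith
  moreover have "opnorm h - opnorm g \<le> norm (g - h)"
    using opnorm_sub[of h g] opnorm_le_norm[of "h - g"] by (simp add: norm_minus_commute)
  ultimately show ?thesis by linarith
qed

lemma opnorm_cont: "continuous_on UNIV opnorm"
  unfolding continuous_on_iff
proof (intro ballI allI impI)
  fix x :: cmat and e :: real assume e: "e > 0"
  show "\<exists>d>0. \<forall>x'\<in>UNIV. dist x' x < d \<longrightarrow> dist (opnorm x') (opnorm x) < e"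
    using e opnorm_lip by (intro exI[of _ e]) (auto simp: dist_norm intro: order.strict_trans1)
qed

lemma opnorm_meas: "opnorm \<in> borel_measurable borel"
  by (rule borel_measurable_continuous_onI[OF opnorm_cont])

lemma parallel:
  assumes v: "v \<noteq> (0::cvec)" and w: "w \<noteq> 0" and d: "det2 v w = 0"
  shows "\<exists>c. c \<noteq> 0 \<and> w = c *s v"
proof (cases "v$1 = 0")
  case False
  define c where "c = w$1 / v$1"
  have "w$2 = c * v$2" using d False by (simp add: c_def det2_def field_simps)
  moreover have "w$1 = c * v$1" using False by (simp add: c_def)
  ultimately have e: "w = c *s v" by (simp add: vec_eq_iff forall_2)
  hence "c \<noteq> 0" using w by auto
  thus ?thesis using e by blast
next
  case True
  hence v2: "v$2 \<noteq> 0" using v by (auto simp: vec_eq_iff forall_2)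
  define c where "c = w$2 / v$2"
  have "w$1 = 0" using d True v2 by (simp add: det2_def)
  hence "w$1 = c * v$1" using True by simp
  moreover have "w$2 = c * v$2" using v2 by (simp add: c_def)
  ultimately have e: "w = c *s v" by (simp add: vec_eq_iff forall_2)
  hence "c \<noteq> 0" using w by auto
  thus ?thesis using e by blast
qed

lemma pdist_le_dist:
  assumes v: "v \<noteq> 0" and w: "w \<noteq> 0"
  shows "pdist v w \<le> norm (w - v) / norm w"
proof -
  have "det2 v w = det2 v (w - v)" by (simp add: det2_def algebra_simps)
  hence "cmod (det2 v w) \<le> norm v * norm (w - v)" using det2_le[of v "w - v"] by simp
  hence "cmod (det2 v w) / (norm v * norm w) \<le> norm v * norm (w - v) / (norm v * norm w)"
    using v w by (intro divide_right_mono) auto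
  also have "\<dots> = norm (w - v) / norm w" using v by simp
  finally show ?thesis by (simp add: pdist_det2)
qed

lemma u_cont:
  fixes u :: "cvec \<Rightarrow> complex"
  assumes q: "q > 0" and B: "B \<ge> 0"
    and inv: "\<And>v c. v \<noteq> 0 \<Longrightarrow> c \<noteq> 0 \<Longrightarrow> u (c *s v) = u v"
    and F2: "\<And>x y. x \<noteq> 0 \<Longrightarrow> y \<noteq> 0 \<Longrightarrow> pdist x y \<noteq> 0 \<Longrightarrow>
               cmod (u x - u y) * logstar (pdist x y) powr q \<le> B"
  shows "continuous_on (- {0}) u"
  unfolding continuous_on_iff
proof (intro ballI allI impI)
  fix v :: cvec and e :: real
  assume vv: "v \<in> - {0}" and e: "e > 0"
  hence v: "v \<noteq> 0" by simp
  define T where "T = B / e + 1"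
  have "B / e \<ge> 0" using B e by simp
  hence T0: "T > 0" by (simp add: T_def)
  define \<eta> where "\<eta> = exp (1 - T powr (1/q))"
  have eta0: "\<eta> > 0" by (simp add: \<eta>_def)
  define \<delta> where "\<delta> = min (norm v / 2) (\<eta> * norm v / 2)"
  have d0: "\<delta> > 0" using v eta0 by (simp add: \<delta>_def)
  show "\<exists>d>0. \<forall>x'\<in>- {0}. dist x' v < d \<longrightarrow> dist (u x') (u v) < e"
  proof (intro exI[of _ \<delta>] conjI ballI impI d0)
    fix w assume "w \<in> - {0}" and dw: "dist w v < \<delta>"
    hence w: "w \<noteq> 0" by simp
    have nwv: "norm (w - v) < \<delta>" using dw by (simp add: dist_norm)
    have "norm v \<le> norm w + norm (w - v)" by (metis norm_minus_commute norm_triangle_sub add.commute)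
    hence nw: "norm w \<ge> norm v / 2" using nwv by (simp add: \<delta>_def)
    have nv0: "norm v > 0" using v by simp
    have "pdist v w \<le> norm (w - v) / norm w" by (rule pdist_le_dist[OF v w])
    also have "\<dots> \<le> norm (w - v) / (norm v / 2)"
      using nw nv0 w by (intro divide_left_mono) auto
    also have "\<dots> < \<delta> / (norm v / 2)" using nwv nv0 by (intro divide_strict_right_mono) auto
    also have "\<dots> \<le> \<eta>" using nv0 by (simp add: \<delta>_def min_le_iff_disj field_simps)
    finally have pe: "pdist v w < \<eta>" .
    show "dist (u w) (u v) < e"
    proof (cases "pdist v w = 0")
      case True
      hence "det2 v w = 0" using v w by (simp add: pdist_det2)
      then obtain c where "c \<noteq> 0" "w = c *s v" using parallel[OF v w] by blast
      hence "u w = u v" using inv[OF v] by simp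
      thus ?thesis using e by simp
    next
      case False
      define d where "d = pdist v w"
      have d0: "0 < d" using pdist_pos[OF False] by (simp add: d_def)
      have d1: "d \<le> 1" by (simp add: d_def pdist_le1)
      have "ln d < ln \<eta>" using d0 pe by (simp add: d_def)
      hence "T powr (1/q) < logstar d" by (simp add: logstar_eq[OF d0 d1] \<eta>_def)
      hence "(T powr (1/q)) powr q < logstar d powr q"
        using T0 q by (intro powr_less_mono2) auto
      hence TL: "T < logstar d powr q" using T0 q by (simp add: powr_powr)
      have "cmod (u v - u w) * logstar d powr q \<le> B" using F2[OF v w False] by (simp add: d_def)
      also have "B < e * T" using e by (simp add: T_def field_simps)
      also have "e * T < e * logstar d powr q" using TL e by simp
      finally have "cmod (u v - u w) * logstar d powr q < e * logstar d powr q" .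
      hence "cmod (u v - u w) < e" by (rule mult_right_less_imp_less) (use TL T0 in simp)
      thus ?thesis by (simp add: dist_norm norm_minus_commute)
    qed
  qed
qed

lemma u_meas:
  fixes u :: "cvec \<Rightarrow> complex"
  assumes "continuous_on (- {0}) u"
  shows "u \<in> borel_measurable borel"
proof -
  have "(\<lambda>x. if x \<in> {0} then u x else u x) \<in> borel_measurable borel"
    by (rule borel_measurable_continuous_on_if) (use assms in auto)
  thus ?thesis by simp
qed


lemma mv_cont: "continuous_on UNIV (\<lambda>g::cmat. g *v v)"
  unfolding matrix_vector_mult_def by (intro continuous_intros)

lemma mv_meas[measurable]: "(\<lambda>g::cmat. g *v v) \<in> borel_measurable borel"
  by (rule borel_measurable_continuous_onI[OF mv_cont])

lemma opnorm_meas'[measurable]: "opnorm \<in> borel_measurable borel"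
  by (rule opnorm_meas)

lemma cocycle_meas[measurable]: "(\<lambda>g. cocycle g v) \<in> borel_measurable borel"
  unfolding cocycle_def by measurable

lemma integrand_meas:
  fixes \<phi> :: "real \<Rightarrow> complex" and u :: "cvec \<Rightarrow> complex"
  assumes S: "sets \<mu> = sets borel" and phi: "continuous_on UNIV \<phi>" and u: "u \<in> borel_measurable borel"
  shows "(\<lambda>g. \<phi> (cocycle g v) * u (g *v v)) \<in> borel_measurable \<mu>"
proof -
  have [measurable]: "\<phi> \<in> borel_measurable borel" by (rule borel_measurable_continuous_onI[OF phi])
  have [measurable]: "u \<in> borel_measurable borel" by (rule u)
  have "(\<lambda>g. \<phi> (cocycle g v) * u (g *v v)) \<in> borel_measurable borel" by measurable
  thus ?thesis by (simp add: measurable_cong_sets[OF S refl])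
qed

definition Wt :: "real \<Rightarrow> cmat \<Rightarrow> real" where
  "Wt q g = (1 + \<bar>ln (opnorm g)\<bar>) * (1 + \<bar>ln (opnorm g)\<bar>) powr q"

lemma Wt_meas[measurable]: "Wt q \<in> borel_measurable borel"
  unfolding Wt_def by measurable

lemma Wt_nonneg: "Wt q g \<ge> 0" by (simp add: Wt_def)

lemma Wt_bound:
  assumes q: "q > 0"
  shows "Wt q g \<le> 2 powr (q+1) * (1 + \<bar>ln (opnorm g)\<bar> powr (q+1))"
proof -
  define L where "L = \<bar>ln (opnorm g)\<bar>"
  have L0: "L \<ge> 0" by (simp add: L_def)
  define m where "m = 1 + L"
  have m1: "m \<ge> 1" using L0 by (simp add: m_def)
  have "Wt q g = m powr (q+1)"
    using m1 by (simp add: Wt_def L_def[symmetric] m_def[symmetric] powr_add)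
  also have "\<dots> \<le> (2 * max 1 L) powr (q+1)"
    using m1 q by (intro powr_mono2) (auto simp: m_def)
  also have "\<dots> = 2 powr (q+1) * (max 1 L) powr (q+1)" using L0 by (simp add: powr_mult)
  also have "(max 1 L) powr (q+1) \<le> 1 + L powr (q+1)"
  proof (cases "L \<le> 1")
    case True thus ?thesis by simp
  next
    case False thus ?thesis by simp
  qed
  hence "2 powr (q+1) * (max 1 L) powr (q+1) \<le> 2 powr (q+1) * (1 + L powr (q+1))" by simp
  finally show ?thesis by (simp add: L_def)
qed

lemma Wt_integrable:
  assumes P: "prob_space \<mu>" and S: "sets \<mu> = sets borel" and q: "q > 0"
    and fin: "(\<integral>\<^sup>+ g. ennreal (\<bar>ln (opnorm g)\<bar> powr (q+1)) \<partial>\<mu>) < \<infinity>"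
  shows "integrable \<mu> (Wt q)"
proof -
  interpret prob_space \<mu> by (rule P)
  have mc: "measurable \<mu> borel = measurable borel borel" by (rule measurable_cong_sets[OF S refl])
  have m1: "(\<lambda>g. \<bar>ln (opnorm g)\<bar> powr (q+1)) \<in> borel_measurable \<mu>"
    unfolding mc by measurable
  have i1: "integrable \<mu> (\<lambda>g. \<bar>ln (opnorm g)\<bar> powr (q+1))"
    using fin m1 by (intro integrableI_bounded) auto
  have i2: "integrable \<mu> (\<lambda>g. 2 powr (q+1) * (1 + \<bar>ln (opnorm g)\<bar> powr (q+1)))"
    using i1 by auto
  show ?thesis
  proof (rule Bochner_Integration.integrable_bound[OF i2])
    show "Wt q \<in> borel_measurable \<mu>" unfolding mc by measurable
    show "AE x in \<mu>. norm (Wt q x) \<le> norm (2 powr (q+1) * (1 + \<bar>ln (opnorm x)\<bar> powr (q+1)))"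
      using Wt_bound[OF q] Wt_nonneg by (intro AE_I2) (simp add: abs_of_nonneg)
  qed
qed

definition Qop :: "cmat measure \<Rightarrow> (real \<Rightarrow> complex) \<Rightarrow> (cvec \<Rightarrow> complex) \<Rightarrow> cvec \<Rightarrow> complex" where
  "Qop \<mu> \<phi> u v = (LINT g|\<mu>. \<phi> (cocycle g v) * u (g *v v))"

lemma integrand_integrable:
  fixes \<phi> :: "real \<Rightarrow> complex" and u :: "cvec \<Rightarrow> complex"
  assumes P: "prob_space \<mu>" and S: "sets \<mu> = sets borel" and phi: "continuous_on UNIV \<phi>"
    and Phi: "\<And>s. cmod (\<phi> s) \<le> \<Phi>"
    and u: "u \<in> borel_measurable borel" and F1: "\<And>x. x \<noteq> 0 \<Longrightarrow> cmod (u x) \<le> A"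
  shows "integrable \<mu> (\<lambda>g. \<phi> (cocycle g v) * u (g *v v))"
proof -
  interpret prob_space \<mu> by (rule P)
  have Phi0: "\<Phi> \<ge> 0" using Phi[of 0] norm_ge_zero order_trans by blast
  have ub: "cmod (u y) \<le> max A (cmod (u 0))" for y
    using F1[of y] by (cases "y = 0") auto
  show ?thesis
  proof (rule integrable_const_bound)
    show "AE x in \<mu>. norm (\<phi> (cocycle x v) * u (x *v v)) \<le> \<Phi> * max A (cmod (u 0))"
      using Phi ub Phi0 by (intro AE_I2) (simp add: norm_mult mult_mono)
    show "(\<lambda>g. \<phi> (cocycle g v) * u (g *v v)) \<in> borel_measurable \<mu>"
      by (rule integrand_meas[OF S phi u])
  qed
qed


lemma Q_est:
  fixes \<phi> :: "real \<Rightarrow> complex" and u :: "cvec \<Rightarrow> complex"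
  assumes P: "prob_space \<mu>" and S: "sets \<mu> = sets borel" and AEdet: "AE g in \<mu>. det g = 1"
    and q: "q > 0" and WI: "integrable \<mu> (Wt q)"
    and phi: "continuous_on UNIV \<phi>" and Phi: "\<And>s. cmod (\<phi> s) \<le> \<Phi>"
    and H1: "\<And>s. cmod (\<phi> s) \<le> \<alpha> + \<beta> * \<bar>s\<bar>"
    and H2: "\<And>s t. cmod (\<phi> s - \<phi> t) \<le> \<gamma> * (1 + \<bar>s\<bar> + \<bar>t\<bar>) * min 1 \<bar>s - t\<bar>"
    and al: "\<alpha> \<ge> 0" and be: "\<beta> \<ge> 0" and ga: "\<gamma> \<ge> 0"
    and um: "u \<in> borel_measurable borel" and A: "A \<ge> 0" and B: "B \<ge> 0"
    and F1: "\<And>x. x \<noteq> 0 \<Longrightarrow> cmod (u x) \<le> A"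
    and F2: "\<And>x y. x \<noteq> 0 \<Longrightarrow> y \<noteq> 0 \<Longrightarrow> pdist x y \<noteq> 0 \<Longrightarrow>
               cmod (u x - u y) * logstar (pdist x y) powr q \<le> B"
  shows "\<And>v. v \<noteq> 0 \<Longrightarrow> cmod (Qop \<mu> \<phi> u v) \<le> (\<alpha> + \<beta> + \<gamma>) * Kc q * (A + B) * (LINT g|\<mu>. Wt q g)"
    and "\<And>v w. v \<noteq> 0 \<Longrightarrow> w \<noteq> 0 \<Longrightarrow> pdist v w \<noteq> 0 \<Longrightarrow>
      cmod (Qop \<mu> \<phi> u v - Qop \<mu> \<phi> u w) * logstar (pdist v w) powr q
        \<le> (\<alpha> + \<beta> + \<gamma>) * Kc q * (A + B) * (LINT g|\<mu>. Wt q g)"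
proof -
  define c where "c = (\<alpha> + \<beta> + \<gamma>) * Kc q * (A + B)"
  have Wdet: "det g = 1 \<Longrightarrow> (1 + ln (opnorm g)) * (1 + ln (opnorm g)) powr q = Wt q g" for g
    using opnorm_ge1[of g] by (simp add: Wt_def)
  have I: "integrable \<mu> (\<lambda>g. \<phi> (cocycle g x) * u (g *v x))" for x
    by (rule integrand_integrable[OF P S phi Phi um F1])
  have cW: "integrable \<mu> (\<lambda>g. c * Wt q g)" using WI by auto
  have intc: "(LINT g|\<mu>. c * Wt q g) = c * (LINT g|\<mu>. Wt q g)" by simp
  {
    fix v :: cvec assume v: "v \<noteq> 0"
    have "cmod (Qop \<mu> \<phi> u v) \<le> (LINT g|\<mu>. cmod (\<phi> (cocycle g v) * u (g *v v)))"
      unfolding Qop_def by (rule integral_norm_bound)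
    also have "\<dots> \<le> (LINT g|\<mu>. c * Wt q g)"
    proof (rule integral_mono_AE)
      show "integrable \<mu> (\<lambda>g. cmod (\<phi> (cocycle g v) * u (g *v v)))" using I by auto
      show "integrable \<mu> (\<lambda>g. c * Wt q g)" by (rule cW)
      show "AE g in \<mu>. cmod (\<phi> (cocycle g v) * u (g *v v)) \<le> c * Wt q g"
        using AEdet
      proof (rule AE_mp, intro AE_I2 impI)
        fix g :: cmat assume g: "det g = 1"
        show "cmod (\<phi> (cocycle g v) * u (g *v v)) \<le> c * Wt q g"
          using pointwise_sup[OF g v q A B F1 H1 al be ga] Wdet[OF g] by (simp add: c_def)
      qed
    qed
    finally show "cmod (Qop \<mu> \<phi> u v) \<le> (\<alpha> + \<beta> + \<gamma>) * Kc q * (A + B) * (LINT g|\<mu>. Wt q g)"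
      using intc by (simp add: c_def)
  }
  {
    fix v w :: cvec assume v: "v \<noteq> 0" and w: "w \<noteq> 0" and dn: "pdist v w \<noteq> 0"
    define P where "P = logstar (pdist v w) powr q"
    have P0: "P \<ge> 0" by (simp add: P_def)
    define f where "f = (\<lambda>g. \<phi> (cocycle g v) * u (g *v v) - \<phi> (cocycle g w) * u (g *v w))"
    have "Qop \<mu> \<phi> u v - Qop \<mu> \<phi> u w = (LINT g|\<mu>. f g)"
      unfolding Qop_def f_def by (rule Bochner_Integration.integral_diff[symmetric, OF I I])
    hence "cmod (Qop \<mu> \<phi> u v - Qop \<mu> \<phi> u w) * P \<le> (LINT g|\<mu>. cmod (f g)) * P"
      using P0 by (simp add: mult_right_mono)
    also have "\<dots> = (LINT g|\<mu>. cmod (f g) * P)" by simp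
    also have "\<dots> \<le> (LINT g|\<mu>. c * Wt q g)"
    proof (rule integral_mono_AE)
      show "integrable \<mu> (\<lambda>g. cmod (f g) * P)" using I unfolding f_def by auto
      show "integrable \<mu> (\<lambda>g. c * Wt q g)" by (rule cW)
      show "AE g in \<mu>. cmod (f g) * P \<le> c * Wt q g"
        using AEdet
      proof (rule AE_mp, intro AE_I2 impI)
        fix g :: cmat assume g: "det g = 1"
        show "cmod (f g) * P \<le> c * Wt q g"
          using pointwise[OF g v w dn q A B F1 F2 H1 H2 al be ga] Wdet[OF g]
          by (simp add: c_def f_def P_def)
      qed
    qed
    finally show "cmod (Qop \<mu> \<phi> u v - Qop \<mu> \<phi> u w) * logstar (pdist v w) powr q
        \<le> (\<alpha> + \<beta> + \<gamma>) * Kc q * (A + B) * (LINT g|\<mu>. Wt q g)"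
      using intc by (simp add: c_def P_def)
  }
qed


definition e1 :: cvec where "e1 = vector [1, 0]"
definition e2 :: cvec where "e2 = vector [0, 1]"

lemma e1c: "e1$1 = 1" "e1$2 = 0" by (simp_all add: e1_def)
lemma e2c: "e2$1 = 0" "e2$2 = 1" by (simp_all add: e2_def)

lemma e1_nz: "e1 \<noteq> 0"
proof
  assume "e1 = 0" hence "e1$1 = 0" by simp
  thus False by (simp add: e1c)
qed

lemma e2_nz: "e2 \<noteq> 0"
proof
  assume "e2 = 0" hence "e2$2 = 0" by simp
  thus False by (simp add: e2c)
qed

lemma pdist_e12: "pdist e1 e2 = 1"
proof -
  have "norm e1 = 1" by (simp add: nv e1c)
  moreover have "norm e2 = 1" by (simp add: nv e2c)
  ultimately show ?thesis by (simp add: pdist_def e1c e2c)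
qed

lemma sup_le:
  assumes "\<And>v. v \<noteq> 0 \<Longrightarrow> cmod (f v) \<le> X"
  shows "sup_part f \<le> X"
  unfolding sup_part_def
proof (rule cSUP_least)
  have "e1 \<in> {v::cvec. v \<noteq> 0}" using e1_nz by simp
  thus "{v::cvec. v \<noteq> 0} \<noteq> {}" by (rule ex_in_conv[THEN iffD1, OF exI])
qed (use assms in auto)

lemma holder_le:
  assumes "\<And>v w. v \<noteq> 0 \<Longrightarrow> w \<noteq> 0 \<Longrightarrow> pdist v w \<noteq> 0 \<Longrightarrow>
             cmod (f v - f w) * logstar (pdist v w) powr q \<le> Y"
  shows "holder_part q f \<le> Y"
  unfolding holder_part_def
proof (rule cSUP_least)
  show "{(v, w). v \<noteq> 0 \<and> w \<noteq> 0 \<and> pdist v w \<noteq> 0} \<noteq> {}"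
  proof -
    have "(e1, e2) \<in> {(v, w). v \<noteq> 0 \<and> w \<noteq> 0 \<and> pdist v w \<noteq> 0}"
      using e1_nz e2_nz pdist_e12 by simp
    thus ?thesis by (rule ex_in_conv[THEN iffD1, OF exI])
  qed
qed (use assms in auto)

lemma clog_mem:
  assumes inv: "\<And>v c. v \<noteq> 0 \<Longrightarrow> c \<noteq> 0 \<Longrightarrow> f (c *s v) = f v"
    and S: "\<And>v. v \<noteq> 0 \<Longrightarrow> cmod (f v) \<le> X"
    and H: "\<And>v w. v \<noteq> 0 \<Longrightarrow> w \<noteq> 0 \<Longrightarrow> pdist v w \<noteq> 0 \<Longrightarrow>
             cmod (f v - f w) * logstar (pdist v w) powr q \<le> Y"
  shows "f \<in> Clog q"
  unfolding Clog_def
proof (intro CollectI conjI allI impI)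
  show "bdd_above ((\<lambda>v. cmod (f v)) ` {v. v \<noteq> 0})" using S by (intro bdd_aboveI2) auto
  show "bdd_above ((\<lambda>(v, w). cmod (f v - f w) * logstar (pdist v w) powr q) `
          {(v, w). v \<noteq> 0 \<and> w \<noteq> 0 \<and> pdist v w \<noteq> 0})"
    using H by (intro bdd_aboveI2) auto
qed (use inv in auto)

lemma clog_props:
  assumes u: "u \<in> Clog q" and q: "q > 0"
  shows "sup_part u \<ge> 0" "holder_part q u \<ge> 0"
    "\<And>x. x \<noteq> 0 \<Longrightarrow> cmod (u x) \<le> sup_part u"
    "\<And>x y. x \<noteq> 0 \<Longrightarrow> y \<noteq> 0 \<Longrightarrow> pdist x y \<noteq> 0 \<Longrightarrow>
               cmod (u x - u y) * logstar (pdist x y) powr q \<le> holder_part q u"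
    "\<And>v c. v \<noteq> 0 \<Longrightarrow> c \<noteq> 0 \<Longrightarrow> u (c *s v) = u v"
    "u \<in> borel_measurable borel"
proof -
  have inv: "\<And>v c. v \<noteq> 0 \<Longrightarrow> c \<noteq> 0 \<Longrightarrow> u (c *s v) = u v"
    and b1: "bdd_above ((\<lambda>v. cmod (u v)) ` {v. v \<noteq> 0})"
    and b2: "bdd_above ((\<lambda>(v, w). cmod (u v - u w) * logstar (pdist v w) powr q) `
          {(v, w). v \<noteq> 0 \<and> w \<noteq> 0 \<and> pdist v w \<noteq> 0})"
    using u by (auto simp: Clog_def)
  have eq: "(\<lambda>(v, w). cmod (u v - u w) * logstar (pdist v w) powr q)
      = (\<lambda>vw. cmod (u (fst vw) - u (snd vw)) * logstar (pdist (fst vw) (snd vw)) powr q)"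
    by (auto simp: fun_eq_iff)
  show F1: "\<And>x. x \<noteq> 0 \<Longrightarrow> cmod (u x) \<le> sup_part u"
    unfolding sup_part_def using b1 by (intro cSUP_upper) auto
  show F2: "\<And>x y. x \<noteq> 0 \<Longrightarrow> y \<noteq> 0 \<Longrightarrow> pdist x y \<noteq> 0 \<Longrightarrow>
               cmod (u x - u y) * logstar (pdist x y) powr q \<le> holder_part q u"
  proof -
    fix x y :: cvec assume "x \<noteq> 0" "y \<noteq> 0" "pdist x y \<noteq> 0"
    hence "(x, y) \<in> {(v, w). v \<noteq> 0 \<and> w \<noteq> 0 \<and> pdist v w \<noteq> 0}" by simp
    from cSUP_upper[OF this b2[unfolded eq]]
    show "cmod (u x - u y) * logstar (pdist x y) powr q \<le> holder_part q u"
      by (simp add: holder_part_def)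
  qed
  show "sup_part u \<ge> 0" using F1[OF e1_nz] norm_ge_zero order_trans by blast
  show B0: "holder_part q u \<ge> 0"
  proof -
    have h: "cmod (u e1 - u e2) * logstar (pdist e1 e2) powr q \<le> holder_part q u"
      using F2[OF e1_nz e2_nz] pdist_e12 by simp
    moreover have "0 \<le> cmod (u e1 - u e2) * logstar (pdist e1 e2) powr q" by simp
    ultimately show ?thesis by linarith
  qed
  show "\<And>v c. v \<noteq> 0 \<Longrightarrow> c \<noteq> 0 \<Longrightarrow> u (c *s v) = u v" by (rule inv)
  show "u \<in> borel_measurable borel"
    by (rule u_meas[OF u_cont[OF q B0 inv F2]])
qed

definition ee :: "real \<Rightarrow> complex" where "ee x = exp (\<i> * complex_of_real x)"

lemma ee_norm: "cmod (ee x) = 1" by (simp add: ee_def norm_exp_i_times)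

lemma ee_add: "ee (x + y) = ee x * ee y" by (simp add: ee_def algebra_simps exp_add[symmetric])

lemma ee_1: "cmod (ee x - 1) \<le> \<bar>x\<bar>"
  using iexp_approx1[of x 0] by (simp add: ee_def)

lemma ee_lip: "cmod (ee x - ee y) \<le> \<bar>x - y\<bar>"
proof -
  have "ee x - ee y = ee y * (ee (x - y) - 1)" using ee_add[of y "x - y"] by (simp add: algebra_simps)
  hence "cmod (ee x - ee y) = cmod (ee (x - y) - 1)" by (simp add: norm_mult ee_norm)
  thus ?thesis using ee_1[of "x - y"] by simp
qed

lemma ee_cont: "continuous_on UNIV (\<lambda>s. ee (\<xi> * s))"
  unfolding ee_def by (intro continuous_intros)

lemma phi1_H2: "cmod (ee (\<xi> * s) - ee (\<xi> * t)) \<le> (2 + \<bar>\<xi>\<bar>) * (1 + \<bar>s\<bar> + \<bar>t\<bar>) * min 1 \<bar>s - t\<bar>"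
proof -
  have a: "cmod (ee (\<xi> * s) - ee (\<xi> * t)) \<le> 2"
    using norm_triangle_ineq4[of "ee (\<xi> * s)" "ee (\<xi> * t)"] by (simp add: ee_norm)
  have b: "cmod (ee (\<xi> * s) - ee (\<xi> * t)) \<le> \<bar>\<xi>\<bar> * \<bar>s - t\<bar>"
    using ee_lip[of "\<xi> * s" "\<xi> * t"] by (simp add: right_diff_distrib[symmetric] abs_mult)
  have c: "cmod (ee (\<xi> * s) - ee (\<xi> * t)) \<le> (2 + \<bar>\<xi>\<bar>) * min 1 \<bar>s - t\<bar>"
  proof (cases "\<bar>s - t\<bar> \<le> 1")
    case True
    have "\<bar>\<xi>\<bar> * \<bar>s - t\<bar> \<le> (2 + \<bar>\<xi>\<bar>) * \<bar>s - t\<bar>" by (intro mult_right_mono) auto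
    thus ?thesis using True b by (simp add: min_def)
  next
    case False thus ?thesis using a by (simp add: min_def)
  qed
  have X0: "0 \<le> (2 + \<bar>\<xi>\<bar>) * min 1 \<bar>s - t\<bar>" by simp
  have "(2 + \<bar>\<xi>\<bar>) * min 1 \<bar>s - t\<bar> * 1 \<le> (2 + \<bar>\<xi>\<bar>) * min 1 \<bar>s - t\<bar> * (1 + \<bar>s\<bar> + \<bar>t\<bar>)"
    by (rule mult_left_mono[OF _ X0]) simp
  hence "cmod (ee (\<xi> * s) - ee (\<xi> * t)) \<le> (2 + \<bar>\<xi>\<bar>) * min 1 \<bar>s - t\<bar> * (1 + \<bar>s\<bar> + \<bar>t\<bar>)"
    using c by simp
  moreover have "(2 + \<bar>\<xi>\<bar>) * min 1 \<bar>s - t\<bar> * (1 + \<bar>s\<bar> + \<bar>t\<bar>)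
     = (2 + \<bar>\<xi>\<bar>) * (1 + \<bar>s\<bar> + \<bar>t\<bar>) * min 1 \<bar>s - t\<bar>" by (simp only: mult_ac)
  ultimately show ?thesis by simp
qed

lemma psi_H1: "cmod (ee (\<xi> * s) - ee (\<eta> * s)) \<le> 0 + \<bar>\<xi> - \<eta>\<bar> * \<bar>s\<bar>"
proof -
  have "ee (\<xi> * s) - ee (\<eta> * s) = ee (\<eta> * s) * (ee ((\<xi> - \<eta>) * s) - 1)"
    using ee_add[of "\<eta> * s" "(\<xi> - \<eta>) * s"] by (simp add: algebra_simps)
  hence "cmod (ee (\<xi> * s) - ee (\<eta> * s)) = cmod (ee ((\<xi> - \<eta>) * s) - 1)" by (simp add: norm_mult ee_norm)
  thus ?thesis using ee_1[of "(\<xi> - \<eta>) * s"] by (simp add: abs_mult)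
qed

lemma psi_H2:
  "cmod ((ee (\<xi> * s) - ee (\<eta> * s)) - (ee (\<xi> * t) - ee (\<eta> * t)))
     \<le> (\<bar>\<xi> - \<eta>\<bar> * (1 + \<bar>\<eta>\<bar>)) * (1 + \<bar>s\<bar> + \<bar>t\<bar>) * min 1 \<bar>s - t\<bar>"
proof -
  define \<delta> where "\<delta> = \<xi> - \<eta>"
  define D where "D = cmod ((ee (\<xi> * s) - ee (\<eta> * s)) - (ee (\<xi> * t) - ee (\<eta> * t)))"
  have d0: "\<bar>\<delta>\<bar> \<ge> 0" by simp
  show ?thesis
  proof (cases "\<bar>s - t\<bar> \<le> 1")
    case False
    have "D \<le> cmod (ee (\<xi> * s) - ee (\<eta> * s)) + cmod (ee (\<xi> * t) - ee (\<eta> * t))"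
      unfolding D_def by (rule norm_triangle_ineq4)
    also have "\<dots> \<le> \<bar>\<delta>\<bar> * \<bar>s\<bar> + \<bar>\<delta>\<bar> * \<bar>t\<bar>"
      using psi_H1[of \<xi> s \<eta>] psi_H1[of \<xi> t \<eta>] by (simp add: \<delta>_def)
    also have "\<dots> \<le> (\<bar>\<delta>\<bar> * (1 + \<bar>\<eta>\<bar>)) * (1 + \<bar>s\<bar> + \<bar>t\<bar>)"
    proof -
      have "\<bar>\<delta>\<bar> * \<bar>s\<bar> + \<bar>\<delta>\<bar> * \<bar>t\<bar> \<le> \<bar>\<delta>\<bar> * (1 + \<bar>s\<bar> + \<bar>t\<bar>)"
        by (simp add: algebra_simps)
      also have "\<dots> \<le> (\<bar>\<delta>\<bar> * (1 + \<bar>\<eta>\<bar>)) * (1 + \<bar>s\<bar> + \<bar>t\<bar>)"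
        by (intro mult_right_mono) (auto simp: mult_le_cancel_left1)
      finally show ?thesis .
    qed
    finally show ?thesis using False by (simp add: D_def \<delta>_def min_def)
  next
    case True
    have id: "(ee (\<xi> * s) - ee (\<eta> * s)) - (ee (\<xi> * t) - ee (\<eta> * t))
       = (ee (\<eta> * s) - ee (\<eta> * t)) * (ee (\<delta> * s) - 1) + ee (\<eta> * t) * (ee (\<delta> * s) - ee (\<delta> * t))"
    proof -
      have "ee (\<xi> * s) = ee (\<eta> * s) * ee (\<delta> * s)" using ee_add[of "\<eta> * s" "\<delta> * s"]
        by (simp add: \<delta>_def algebra_simps)
      moreover have "ee (\<xi> * t) = ee (\<eta> * t) * ee (\<delta> * t)" using ee_add[of "\<eta> * t" "\<delta> * t"]
        by (simp add: \<delta>_def algebra_simps)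
      ultimately show ?thesis by (simp add: algebra_simps)
    qed
    have "D \<le> cmod ((ee (\<eta> * s) - ee (\<eta> * t)) * (ee (\<delta> * s) - 1)) + cmod (ee (\<eta> * t) * (ee (\<delta> * s) - ee (\<delta> * t)))"
      unfolding D_def id by (rule norm_triangle_ineq)
    also have "\<dots> = cmod (ee (\<eta> * s) - ee (\<eta> * t)) * cmod (ee (\<delta> * s) - 1) + cmod (ee (\<delta> * s) - ee (\<delta> * t))"
      by (simp add: norm_mult ee_norm)
    also have "\<dots> \<le> (\<bar>\<eta>\<bar> * \<bar>s - t\<bar>) * (\<bar>\<delta>\<bar> * \<bar>s\<bar>) + \<bar>\<delta>\<bar> * \<bar>s - t\<bar>"
    proof (rule add_mono)
      show "cmod (ee (\<eta> * s) - ee (\<eta> * t)) * cmod (ee (\<delta> * s) - 1) \<le> (\<bar>\<eta>\<bar> * \<bar>s - t\<bar>) * (\<bar>\<delta>\<bar> * \<bar>s\<bar>)"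
        using ee_lip[of "\<eta> * s" "\<eta> * t"] ee_1[of "\<delta> * s"]
        by (intro mult_mono) (auto simp: right_diff_distrib[symmetric] abs_mult)
      show "cmod (ee (\<delta> * s) - ee (\<delta> * t)) \<le> \<bar>\<delta>\<bar> * \<bar>s - t\<bar>"
        using ee_lip[of "\<delta> * s" "\<delta> * t"] by (simp add: right_diff_distrib[symmetric] abs_mult)
    qed
    also have "\<dots> = \<bar>\<delta>\<bar> * (1 + \<bar>\<eta>\<bar> * \<bar>s\<bar>) * \<bar>s - t\<bar>" by (simp add: algebra_simps)
    also have "\<dots> \<le> (\<bar>\<delta>\<bar> * (1 + \<bar>\<eta>\<bar>)) * (1 + \<bar>s\<bar> + \<bar>t\<bar>) * \<bar>s - t\<bar>"
    proof (intro mult_right_mono)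
      have "1 + \<bar>\<eta>\<bar> * \<bar>s\<bar> \<le> (1 + \<bar>\<eta>\<bar>) * (1 + \<bar>s\<bar> + \<bar>t\<bar>)" by (simp add: algebra_simps)
      hence "\<bar>\<delta>\<bar> * (1 + \<bar>\<eta>\<bar> * \<bar>s\<bar>) \<le> \<bar>\<delta>\<bar> * ((1 + \<bar>\<eta>\<bar>) * (1 + \<bar>s\<bar> + \<bar>t\<bar>))"
        by (intro mult_left_mono) auto
      thus "\<bar>\<delta>\<bar> * (1 + \<bar>\<eta>\<bar> * \<bar>s\<bar>) \<le> \<bar>\<delta>\<bar> * (1 + \<bar>\<eta>\<bar>) * (1 + \<bar>s\<bar> + \<bar>t\<bar>)" by (simp add: mult.assoc)
    qed auto
    finally show ?thesis using True by (simp add: D_def \<delta>_def min_def)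
  qed
qed


lemma Pxi_Qop: "Pxi \<mu> \<xi> u = Qop \<mu> (\<lambda>s. ee (\<xi> * s)) u"
  by (simp add: fun_eq_iff Pxi_def Qop_def ee_def)

lemma mom_down:
  assumes P: "prob_space \<mu>" and S: "sets \<mu> = sets borel" and p: "p > 0"
    and fin: "(\<integral>\<^sup>+ g. ennreal (\<bar>ln (opnorm g)\<bar> powr (p + 1)) \<partial>\<mu>) < \<infinity>"
  shows "(\<integral>\<^sup>+ g. ennreal (\<bar>ln (opnorm g)\<bar> powr p) \<partial>\<mu>) < \<infinity>"
proof -
  interpret prob_space \<mu> by (rule P)
  have mc: "measurable \<mu> borel = measurable borel borel" by (rule measurable_cong_sets[OF S refl])
  have i1: "integrable \<mu> (\<lambda>g. \<bar>ln (opnorm g)\<bar> powr (p+1))"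
    using fin by (intro integrableI_bounded) (auto simp: mc)
  have i2: "integrable \<mu> (\<lambda>g. 1 + \<bar>ln (opnorm g)\<bar> powr (p+1))" using i1 by auto
  have pw: "x powr p \<le> 1 + x powr (p+1)" if x: "x \<ge> 0" for x :: real
  proof (cases "x \<le> 1")
    case True
    hence "x powr p \<le> 1 powr p" using x p by (intro powr_mono2) auto
    hence "x powr p \<le> 1" by simp
    thus ?thesis by (smt (verit) powr_ge_zero)
  next
    case False
    hence "x powr p \<le> x powr (p+1)" by (intro powr_mono) auto
    thus ?thesis by simp
  qed
  have i3: "integrable \<mu> (\<lambda>g. \<bar>ln (opnorm g)\<bar> powr p)"
  proof (rule Bochner_Integration.integrable_bound[OF i2])
    show "(\<lambda>g. \<bar>ln (opnorm g)\<bar> powr p) \<in> borel_measurable \<mu>" unfolding mc by measurable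
    show "AE x in \<mu>. norm (\<bar>ln (opnorm x)\<bar> powr p) \<le> norm (1 + \<bar>ln (opnorm x)\<bar> powr (p+1))"
      using pw by (intro AE_I2) simp
  qed
  thus ?thesis by (simp add: integrable_iff_bounded)
qed

lemma main_bounds:
  assumes P: "prob_space \<mu>" and S: "sets \<mu> = sets borel" and AEdet: "AE g in \<mu>. det g = 1"
    and q: "q > 0" and WI: "integrable \<mu> (Wt q)" and u: "u \<in> Clog q"
  shows "Pxi \<mu> \<xi> u \<in> Clog q"
    "lognorm q (Pxi \<mu> \<xi> u) \<le> 2 * (3 + \<bar>\<xi>\<bar>) * (Kc q * (LINT g|\<mu>. Wt q g)) * lognorm q u"
    "lognorm q (\<lambda>v. Pxi \<mu> \<xi> u v - Pxi \<mu> \<eta> u v)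
       \<le> 2 * (\<bar>\<xi> - \<eta>\<bar> * (2 + \<bar>\<eta>\<bar>)) * (Kc q * (LINT g|\<mu>. Wt q g)) * lognorm q u"
proof -
  define A where "A = sup_part u"
  define B where "B = holder_part q u"
  define K where "K = Kc q * (LINT g|\<mu>. Wt q g)"
  note cp = clog_props[OF u q, folded A_def B_def]
  have A: "A \<ge> 0" and B: "B \<ge> 0" using cp by auto
  have LN: "lognorm q u = A + B" by (simp add: lognorm_def A_def B_def)
  have inv: "u (c *s y) = u y" if "c \<noteq> 0" for c y
    using cp(5)[OF _ that, of y] by (cases "y = 0") auto
  have Pinv: "Pxi \<mu> \<zeta> u (c *s v) = Pxi \<mu> \<zeta> u v" if "c \<noteq> 0" for c v \<zeta>
    unfolding Pxi_def using that by (simp add: cocycle_scale mv_scale inv)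
  have E1: "\<And>v. v \<noteq> 0 \<Longrightarrow> cmod (Qop \<mu> (\<lambda>s. ee (\<xi> * s)) u v) \<le> (1 + 0 + (2 + \<bar>\<xi>\<bar>)) * Kc q * (A + B) * (LINT g|\<mu>. Wt q g)"
   and E2: "\<And>v w. v \<noteq> 0 \<Longrightarrow> w \<noteq> 0 \<Longrightarrow> pdist v w \<noteq> 0 \<Longrightarrow>
      cmod (Qop \<mu> (\<lambda>s. ee (\<xi> * s)) u v - Qop \<mu> (\<lambda>s. ee (\<xi> * s)) u w) * logstar (pdist v w) powr q
        \<le> (1 + 0 + (2 + \<bar>\<xi>\<bar>)) * Kc q * (A + B) * (LINT g|\<mu>. Wt q g)"
  proof -
    have Phi1: "\<And>s. cmod (ee (\<xi> * s)) \<le> 1" by (simp add: ee_norm)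
    have H1a: "\<And>s. cmod (ee (\<xi> * s)) \<le> 1 + 0 * \<bar>s\<bar>" by (simp add: ee_norm)
    have al: "(0::real) \<le> 1" and be: "(0::real) \<le> 0" and ga: "0 \<le> 2 + \<bar>\<xi>\<bar>" by auto
    note QE = Q_est[OF P S AEdet q WI ee_cont Phi1 H1a phi1_H2 al be ga cp(6) A B cp(3) cp(4)]
    show "\<And>v. v \<noteq> 0 \<Longrightarrow> cmod (Qop \<mu> (\<lambda>s. ee (\<xi> * s)) u v) \<le> (1 + 0 + (2 + \<bar>\<xi>\<bar>)) * Kc q * (A + B) * (LINT g|\<mu>. Wt q g)"
      by (rule QE(1))
    show "\<And>v w. v \<noteq> 0 \<Longrightarrow> w \<noteq> 0 \<Longrightarrow> pdist v w \<noteq> 0 \<Longrightarrow>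
      cmod (Qop \<mu> (\<lambda>s. ee (\<xi> * s)) u v - Qop \<mu> (\<lambda>s. ee (\<xi> * s)) u w) * logstar (pdist v w) powr q
        \<le> (1 + 0 + (2 + \<bar>\<xi>\<bar>)) * Kc q * (A + B) * (LINT g|\<mu>. Wt q g)"
      by (rule QE(2))
  qed
  have X: "(1 + 0 + (2 + \<bar>\<xi>\<bar>)) * Kc q * (A + B) * (LINT g|\<mu>. Wt q g) = (3 + \<bar>\<xi>\<bar>) * K * lognorm q u"
    by (simp add: K_def LN algebra_simps)
  have E1': "\<And>v. v \<noteq> 0 \<Longrightarrow> cmod (Pxi \<mu> \<xi> u v) \<le> (3 + \<bar>\<xi>\<bar>) * K * lognorm q u"
    unfolding Pxi_Qop by (rule E1[unfolded X])
  have E2': "\<And>v w. v \<noteq> 0 \<Longrightarrow> w \<noteq> 0 \<Longrightarrow> pdist v w \<noteq> 0 \<Longrightarrow>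
      cmod (Pxi \<mu> \<xi> u v - Pxi \<mu> \<xi> u w) * logstar (pdist v w) powr q \<le> (3 + \<bar>\<xi>\<bar>) * K * lognorm q u"
    unfolding Pxi_Qop by (rule E2[unfolded X])
  show "Pxi \<mu> \<xi> u \<in> Clog q"
    by (rule clog_mem[OF Pinv E1' E2'])
  have "sup_part (Pxi \<mu> \<xi> u) \<le> (3 + \<bar>\<xi>\<bar>) * K * lognorm q u"
    by (rule sup_le[OF E1'])
  moreover have "holder_part q (Pxi \<mu> \<xi> u) \<le> (3 + \<bar>\<xi>\<bar>) * K * lognorm q u"
    by (rule holder_le[OF E2'])
  ultimately have "lognorm q (Pxi \<mu> \<xi> u) \<le> 2 * ((3 + \<bar>\<xi>\<bar>) * K * lognorm q u)"
    unfolding lognorm_def by linarith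
  thus "lognorm q (Pxi \<mu> \<xi> u) \<le> 2 * (3 + \<bar>\<xi>\<bar>) * (Kc q * (LINT g|\<mu>. Wt q g)) * lognorm q u"
    by (simp only: K_def mult.assoc)
  define \<psi> where "\<psi> = (\<lambda>s. ee (\<xi> * s) - ee (\<eta> * s))"
  have psic: "continuous_on UNIV \<psi>" unfolding \<psi>_def ee_def by (intro continuous_intros)
  have psiB: "cmod (\<psi> s) \<le> 2" for s
    unfolding \<psi>_def using norm_triangle_ineq4[of "ee (\<xi> * s)" "ee (\<eta> * s)"] by (simp add: ee_norm)
  have I: "integrable \<mu> (\<lambda>g. ee (\<zeta> * cocycle g v) * u (g *v v))" for \<zeta> v
    by (rule integrand_integrable[OF P S ee_cont _ cp(6) cp(3), where \<Phi>=1]) (simp add: ee_norm)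
  have Dq: "Pxi \<mu> \<xi> u v - Pxi \<mu> \<eta> u v = Qop \<mu> \<psi> u v" for v
  proof -
    have "Qop \<mu> \<psi> u v = (LINT g|\<mu>. ee (\<xi> * cocycle g v) * u (g *v v) - ee (\<eta> * cocycle g v) * u (g *v v))"
      unfolding Qop_def \<psi>_def by (simp add: left_diff_distrib)
    also have "\<dots> = Pxi \<mu> \<xi> u v - Pxi \<mu> \<eta> u v"
      unfolding Pxi_Qop Qop_def by (rule Bochner_Integration.integral_diff[OF I I])
    finally show ?thesis by simp
  qed
  have D1: "\<And>v. v \<noteq> 0 \<Longrightarrow> cmod (Qop \<mu> \<psi> u v) \<le> (0 + \<bar>\<xi> - \<eta>\<bar> + \<bar>\<xi> - \<eta>\<bar> * (1 + \<bar>\<eta>\<bar>)) * Kc q * (A + B) * (LINT g|\<mu>. Wt q g)"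
   and D2: "\<And>v w. v \<noteq> 0 \<Longrightarrow> w \<noteq> 0 \<Longrightarrow> pdist v w \<noteq> 0 \<Longrightarrow>
      cmod (Qop \<mu> \<psi> u v - Qop \<mu> \<psi> u w) * logstar (pdist v w) powr q
        \<le> (0 + \<bar>\<xi> - \<eta>\<bar> + \<bar>\<xi> - \<eta>\<bar> * (1 + \<bar>\<eta>\<bar>)) * Kc q * (A + B) * (LINT g|\<mu>. Wt q g)"
  proof -
    have H1a: "\<And>s. cmod (\<psi> s) \<le> 0 + \<bar>\<xi> - \<eta>\<bar> * \<bar>s\<bar>" unfolding \<psi>_def by (rule psi_H1)
    have H2a: "\<And>s t. cmod (\<psi> s - \<psi> t) \<le> (\<bar>\<xi> - \<eta>\<bar> * (1 + \<bar>\<eta>\<bar>)) * (1 + \<bar>s\<bar> + \<bar>t\<bar>) * min 1 \<bar>s - t\<bar>"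
      unfolding \<psi>_def by (rule psi_H2)
    have al: "(0::real) \<le> 0" and be: "0 \<le> \<bar>\<xi> - \<eta>\<bar>" and ga: "0 \<le> \<bar>\<xi> - \<eta>\<bar> * (1 + \<bar>\<eta>\<bar>)" by auto
    note QE = Q_est[OF P S AEdet q WI psic psiB H1a H2a al be ga cp(6) A B cp(3) cp(4)]
    show "\<And>v. v \<noteq> 0 \<Longrightarrow> cmod (Qop \<mu> \<psi> u v) \<le> (0 + \<bar>\<xi> - \<eta>\<bar> + \<bar>\<xi> - \<eta>\<bar> * (1 + \<bar>\<eta>\<bar>)) * Kc q * (A + B) * (LINT g|\<mu>. Wt q g)"
      by (rule QE(1))
    show "\<And>v w. v \<noteq> 0 \<Longrightarrow> w \<noteq> 0 \<Longrightarrow> pdist v w \<noteq> 0 \<Longrightarrow>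
      cmod (Qop \<mu> \<psi> u v - Qop \<mu> \<psi> u w) * logstar (pdist v w) powr q
        \<le> (0 + \<bar>\<xi> - \<eta>\<bar> + \<bar>\<xi> - \<eta>\<bar> * (1 + \<bar>\<eta>\<bar>)) * Kc q * (A + B) * (LINT g|\<mu>. Wt q g)"
      by (rule QE(2))
  qed
  have Y: "(0 + \<bar>\<xi> - \<eta>\<bar> + \<bar>\<xi> - \<eta>\<bar> * (1 + \<bar>\<eta>\<bar>)) * Kc q * (A + B) * (LINT g|\<mu>. Wt q g)
      = (\<bar>\<xi> - \<eta>\<bar> * (2 + \<bar>\<eta>\<bar>)) * K * lognorm q u"
    by (simp add: K_def LN algebra_simps)
  have D1': "\<And>v. v \<noteq> 0 \<Longrightarrow> cmod (Pxi \<mu> \<xi> u v - Pxi \<mu> \<eta> u v) \<le> (\<bar>\<xi> - \<eta>\<bar> * (2 + \<bar>\<eta>\<bar>)) * K * lognorm q u"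
    unfolding Dq by (rule D1[unfolded Y])
  have D2': "\<And>v w. v \<noteq> 0 \<Longrightarrow> w \<noteq> 0 \<Longrightarrow> pdist v w \<noteq> 0 \<Longrightarrow>
      cmod ((Pxi \<mu> \<xi> u v - Pxi \<mu> \<eta> u v) - (Pxi \<mu> \<xi> u w - Pxi \<mu> \<eta> u w)) * logstar (pdist v w) powr q
       \<le> (\<bar>\<xi> - \<eta>\<bar> * (2 + \<bar>\<eta>\<bar>)) * K * lognorm q u"
    unfolding Dq by (rule D2[unfolded Y])
  have "sup_part (\<lambda>v. Pxi \<mu> \<xi> u v - Pxi \<mu> \<eta> u v) \<le> (\<bar>\<xi> - \<eta>\<bar> * (2 + \<bar>\<eta>\<bar>)) * K * lognorm q u"
    by (rule sup_le) (rule D1')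
  moreover have "holder_part q (\<lambda>v. Pxi \<mu> \<xi> u v - Pxi \<mu> \<eta> u v) \<le> (\<bar>\<xi> - \<eta>\<bar> * (2 + \<bar>\<eta>\<bar>)) * K * lognorm q u"
    by (rule holder_le) (rule D2')
  ultimately have "lognorm q (\<lambda>v. Pxi \<mu> \<xi> u v - Pxi \<mu> \<eta> u v)
       \<le> 2 * ((\<bar>\<xi> - \<eta>\<bar> * (2 + \<bar>\<eta>\<bar>)) * K * lognorm q u)"
    unfolding lognorm_def by linarith
  thus "lognorm q (\<lambda>v. Pxi \<mu> \<xi> u v - Pxi \<mu> \<eta> u v)
       \<le> 2 * (\<bar>\<xi> - \<eta>\<bar> * (2 + \<bar>\<eta>\<bar>)) * (Kc q * (LINT g|\<mu>. Wt q g)) * lognorm q u"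
    by (simp only: K_def mult.assoc)
qed


theorem proposition4p10:
  fixes \<mu> :: "cmat measure" and p :: real
  assumes "p > 1"
    and "prob_space \<mu>"
    and "sets \<mu> = sets borel"
    and "AE g in \<mu>. det g = 1"
  shows "((\<integral>\<^sup>+ g. ennreal (\<bar>ln (opnorm g)\<bar> powr p) \<partial>\<mu>) < \<infinity> \<longrightarrow>
          (\<forall>\<xi>. \<exists>C. \<forall>u\<in>Clog (p - 1). Pxi \<mu> \<xi> u \<in> Clog (p - 1)
                 \<and> lognorm (p - 1) (Pxi \<mu> \<xi> u) \<le> C * lognorm (p - 1) u)
        \<and> (\<forall>\<xi>0. \<forall>\<epsilon>>0. \<exists>\<delta>>0. \<forall>\<xi>. \<bar>\<xi> - \<xi>0\<bar> < \<delta> \<longrightarrow>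
             (\<forall>u\<in>Clog (p - 1).
                lognorm (p - 1) (\<lambda>v. Pxi \<mu> \<xi> u v - Pxi \<mu> \<xi>0 u v) \<le> \<epsilon> * lognorm (p - 1) u)))
       \<and> ((\<integral>\<^sup>+ g. ennreal (\<bar>ln (opnorm g)\<bar> powr (p + 1)) \<partial>\<mu>) < \<infinity> \<longrightarrow>
          (\<forall>\<xi>0. \<exists>\<delta>>0. \<exists>L. \<forall>\<xi>1 \<xi>2. \<bar>\<xi>1 - \<xi>0\<bar> < \<delta> \<longrightarrow> \<bar>\<xi>2 - \<xi>0\<bar> < \<delta> \<longrightarrow>
             (\<forall>u\<in>Clog (p - 1).
                lognorm (p - 1) (\<lambda>v. Pxi \<mu> \<xi>1 u v - Pxi \<mu> \<xi>2 u v)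
                  \<le> L * \<bar>\<xi>1 - \<xi>2\<bar> * lognorm (p - 1) u)))"
proof -
  note P = assms(2) and S = assms(3) and AEdet = assms(4)
  define q where "q = p - 1"
  have q: "q > 0" using assms(1) by (simp add: q_def)
  have pq: "p = q + 1" by (simp add: q_def)
  have LNn: "lognorm q u \<ge> 0" if "u \<in> Clog q" for u
    using clog_props(1,2)[OF that q] by (simp add: lognorm_def)
  have Part1: "(\<forall>\<xi>. \<exists>C. \<forall>u\<in>Clog q. Pxi \<mu> \<xi> u \<in> Clog q
                 \<and> lognorm q (Pxi \<mu> \<xi> u) \<le> C * lognorm q u)
        \<and> (\<forall>\<xi>0. \<forall>\<epsilon>>0. \<exists>\<delta>>0. \<forall>\<xi>. \<bar>\<xi> - \<xi>0\<bar> < \<delta> \<longrightarrow>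
             (\<forall>u\<in>Clog q.
                lognorm q (\<lambda>v. Pxi \<mu> \<xi> u v - Pxi \<mu> \<xi>0 u v) \<le> \<epsilon> * lognorm q u))"
    if mom: "(\<integral>\<^sup>+ g. ennreal (\<bar>ln (opnorm g)\<bar> powr p) \<partial>\<mu>) < \<infinity>"
  proof -
    have WI: "integrable \<mu> (Wt q)" by (rule Wt_integrable[OF P S q]) (use mom pq in simp)
    define K where "K = Kc q * (LINT g|\<mu>. Wt q g)"
    have K0: "K \<ge> 0"
      using Kc_ge1[OF q] integral_nonneg_AE[of "Wt q" \<mu>] Wt_nonneg by (simp add: K_def)
    note MB = main_bounds[OF P S AEdet q WI, folded K_def]
    show ?thesis
    proof (intro conjI allI impI)
      fix \<xi>
      show "\<exists>C. \<forall>u\<in>Clog q. Pxi \<mu> \<xi> u \<in> Clog q \<and> lognorm q (Pxi \<mu> \<xi> u) \<le> C * lognorm q u"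
        using MB(1,2) by blast
    next
      fix \<xi>0 :: real and \<epsilon> :: real assume e: "\<epsilon> > 0"
      define D where "D = 2 * (2 + \<bar>\<xi>0\<bar>) * K"
      have D0: "D \<ge> 0" using K0 by (simp add: D_def)
      define \<delta> where "\<delta> = \<epsilon> / (D + 1)"
      have d0: "\<delta> > 0" using e D0 by (simp add: \<delta>_def)
      show "\<exists>\<delta>>0. \<forall>\<xi>. \<bar>\<xi> - \<xi>0\<bar> < \<delta> \<longrightarrow>
             (\<forall>u\<in>Clog q. lognorm q (\<lambda>v. Pxi \<mu> \<xi> u v - Pxi \<mu> \<xi>0 u v) \<le> \<epsilon> * lognorm q u)"
      proof (intro exI[of _ \<delta>] conjI d0 allI impI ballI)
        fix \<xi> u assume x: "\<bar>\<xi> - \<xi>0\<bar> < \<delta>" and u: "u \<in> Clog q"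
        have "\<bar>\<xi> - \<xi>0\<bar> * D \<le> \<delta> * D" using x D0 by (intro mult_right_mono) auto
        also have "\<dots> \<le> \<epsilon>" using e D0 by (simp add: \<delta>_def field_simps)
        finally have xe: "\<bar>\<xi> - \<xi>0\<bar> * D \<le> \<epsilon>" .
        have "lognorm q (\<lambda>v. Pxi \<mu> \<xi> u v - Pxi \<mu> \<xi>0 u v) \<le> (\<bar>\<xi> - \<xi>0\<bar> * D) * lognorm q u"
          using MB(3)[OF u, of \<xi> \<xi>0] by (simp add: D_def algebra_simps)
        also have "\<dots> \<le> \<epsilon> * lognorm q u" using xe LNn[OF u] by (intro mult_right_mono)
        finally show "lognorm q (\<lambda>v. Pxi \<mu> \<xi> u v - Pxi \<mu> \<xi>0 u v) \<le> \<epsilon> * lognorm q u" .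
      qed
    qed
  qed
  have Part2: "\<forall>\<xi>0. \<exists>\<delta>>0. \<exists>L. \<forall>\<xi>1 \<xi>2. \<bar>\<xi>1 - \<xi>0\<bar> < \<delta> \<longrightarrow> \<bar>\<xi>2 - \<xi>0\<bar> < \<delta> \<longrightarrow>
             (\<forall>u\<in>Clog q.
                lognorm q (\<lambda>v. Pxi \<mu> \<xi>1 u v - Pxi \<mu> \<xi>2 u v)
                  \<le> L * \<bar>\<xi>1 - \<xi>2\<bar> * lognorm q u)"
    if mom: "(\<integral>\<^sup>+ g. ennreal (\<bar>ln (opnorm g)\<bar> powr (p + 1)) \<partial>\<mu>) < \<infinity>"
  proof -
    have mom': "(\<integral>\<^sup>+ g. ennreal (\<bar>ln (opnorm g)\<bar> powr p) \<partial>\<mu>) < \<infinity>"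
      using mom_down[OF P S _ mom] assms(1) by simp
    have WI: "integrable \<mu> (Wt q)" by (rule Wt_integrable[OF P S q]) (use mom' pq in simp)
    define K where "K = Kc q * (LINT g|\<mu>. Wt q g)"
    have K0: "K \<ge> 0"
      using Kc_ge1[OF q] integral_nonneg_AE[of "Wt q" \<mu>] Wt_nonneg by (simp add: K_def)
    note MB = main_bounds[OF P S AEdet q WI, folded K_def]
    show ?thesis
    proof (intro allI)
      fix \<xi>0 :: real
      show "\<exists>\<delta>>0. \<exists>L. \<forall>\<xi>1 \<xi>2. \<bar>\<xi>1 - \<xi>0\<bar> < \<delta> \<longrightarrow> \<bar>\<xi>2 - \<xi>0\<bar> < \<delta> \<longrightarrow>
             (\<forall>u\<in>Clog q. lognorm q (\<lambda>v. Pxi \<mu> \<xi>1 u v - Pxi \<mu> \<xi>2 u v)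
                  \<le> L * \<bar>\<xi>1 - \<xi>2\<bar> * lognorm q u)"
      proof (rule exI[of _ 1], intro conjI exI[of _ "2 * (3 + \<bar>\<xi>0\<bar>) * K"] allI impI ballI)
        fix \<xi>1 \<xi>2 :: real and u
        assume x1: "\<bar>\<xi>1 - \<xi>0\<bar> < 1" and x2: "\<bar>\<xi>2 - \<xi>0\<bar> < 1" and u: "u \<in> Clog q"
        have "2 + \<bar>\<xi>2\<bar> \<le> 3 + \<bar>\<xi>0\<bar>" using x2 by linarith
        hence "2 * (\<bar>\<xi>1 - \<xi>2\<bar> * (2 + \<bar>\<xi>2\<bar>)) * K \<le> 2 * (3 + \<bar>\<xi>0\<bar>) * K * \<bar>\<xi>1 - \<xi>2\<bar>"
        proof -
          have c0: "0 \<le> 2 * \<bar>\<xi>1 - \<xi>2\<bar> * K" using K0 by simp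
          have "(2 * \<bar>\<xi>1 - \<xi>2\<bar> * K) * (2 + \<bar>\<xi>2\<bar>) \<le> (2 * \<bar>\<xi>1 - \<xi>2\<bar> * K) * (3 + \<bar>\<xi>0\<bar>)"
            by (rule mult_left_mono[OF \<open>2 + \<bar>\<xi>2\<bar> \<le> 3 + \<bar>\<xi>0\<bar>\<close> c0])
          thus ?thesis by (simp only: mult_ac)
        qed
        hence "2 * (\<bar>\<xi>1 - \<xi>2\<bar> * (2 + \<bar>\<xi>2\<bar>)) * K * lognorm q u \<le> 2 * (3 + \<bar>\<xi>0\<bar>) * K * \<bar>\<xi>1 - \<xi>2\<bar> * lognorm q u"
          using LNn[OF u] by (intro mult_right_mono)
        with MB(3)[OF u, of \<xi>1 \<xi>2]
        show "lognorm q (\<lambda>v. Pxi \<mu> \<xi>1 u v - Pxi \<mu> \<xi>2 u v) \<le> 2 * (3 + \<bar>\<xi>0\<bar>) * K * \<bar>\<xi>1 - \<xi>2\<bar> * lognorm q u"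
          by linarith
      qed simp
    qed
  qed
  show ?thesis unfolding q_def[symmetric] using Part1 Part2 by blast
qed


end
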